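(* Let $\mu$ be a localized measure on a $\mathrm{CAT}(\kappa)$ space $M$ with Fréchet mean $\bar\mu$, and let $\hat\mu=(\log_{\bar\mu})_\sharp\mu$. Then the apex $0$ of $T_{\bar\mu}M$ is the Fréchet mean of $\hat\mu$ on $(T_{\bar\mu}M,d_{\bar\mu})$.
   Context: Let $(M,d)$ be a $\mathrm{CAT}(\kappa)$ space. For geodesics $\gamma_1,\gamma_2$ issuing from $p$ parametrized by arclength, $\cos\angle(\gamma_1,\gamma_2)=\lim_{s,t\to0}\frac{s^2+t^2-d(\gamma_1(s),\gamma_2(t))^2}{2st}$, $\angle\in[0,\pi]$; classes of geodesics at angle $0$ form the space of directions $S_pM$. The tangent cone $T_pM=S_pM\times[0,\infty)/(S_pM\times\{0\})$ has apex $0$, length $\|(V,t)\|=t$, inner product $\langle V,W\rangle_p=\|V\|\|W\|\cos\angle(V,W)$ and conical metric $d_p(V,W)=\sqrt{\|V\|^2+\|W\|^2-2\langle V,W\rangle_p}$ (a $\mathrm{CAT}(0)$ cone). For $v$ joined to $p$ by a unique unit-speed shortest path $\gamma_v$, $\log_p v=d(p,v)\gamma_v'(0)$. For a Borel probability measure $\mu$ on $M$ with finite Fréchet function $F(p)=F_\mu(p)=\frac12\int_M d(p,x)^2\mu(dx)$, a Fréchet mean is a minimizer of $F$. $\mu$ is localized if its Fréchet mean $\bar\mu$ is unique, $F$ is convex on a neighborhood of $\bar\mu$, and $\log_{\bar\mu}$ is uniquely defined $\mu$-a.s.; then $\hat\mu=(\log_{\bar\mu})_\sharp\mu$ is a measure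 on $T_{\bar\mu}M$. *)

theory Defs
  imports "HOL-Analysis.Analysis" "HOL-Probability.Probability"
begin

definition model_space :: "real \<Rightarrow> (real^3) set" where
  "model_space \<kappa> =
     (if \<kappa> = 0 then {x. x $ 3 = 0}
      else if \<kappa> > 0 then {x. norm x = 1 / sqrt \<kappa>}
      else {x. (x $ 1)^2 + (x $ 2)^2 - (x $ 3)^2 = 1 / \<kappa> \<and> x $ 3 > 0})"

definition model_dist :: "real \<Rightarrow> real^3 \<Rightarrow> real^3 \<Rightarrow> real" where
  "model_dist \<kappa> x y =
     (if \<kappa> = 0 then dist x y
      else if \<kappa> > 0 then arccos (\<kappa> * (x \<bullet> y)) / sqrt \<kappa>
      else arcosh (\<kappa> * ((x $ 1) * (y $ 1) + (x $ 2) * (y $ 2) - (x $ 3) * (y $ 3))) / sqrt (- \<kappa>))"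

text \<open>r < D_kappa, where D_kappa = pi / sqrt kappa for kappa > 0 and D_kappa = infinity otherwise.\<close>
definition below_D :: "real \<Rightarrow> real \<Rightarrow> bool" where
  "below_D \<kappa> r \<longleftrightarrow> \<kappa> \<le> 0 \<or> r < pi / sqrt \<kappa>"

definition geodesic_path :: "real \<Rightarrow> (real \<Rightarrow> 'a::metric_space) \<Rightarrow> bool" where
  "geodesic_path L \<gamma> \<longleftrightarrow> L \<ge> 0 \<and> (\<forall>s\<in>{0..L}. \<forall>t\<in>{0..L}. dist (\<gamma> s) (\<gamma> t) = \<bar>s - t\<bar>)"

definition geodesic_seg :: "'a::metric_space \<Rightarrow> 'a \<Rightarrow> (real \<Rightarrow> 'a) \<Rightarrow> bool" where
  "geodesic_seg u v \<gamma> \<longleftrightarrow> geodesic_path (dist u v) \<gamma> \<and> \<gamma> 0 = u \<and> \<gamma> (dist u v) = v"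

text \<open>CAT(kappa) in the sense of Bridson--Haefliger: D_kappa-geodesic, and every geodesic
triangle of perimeter < 2 D_kappa satisfies the CAT(kappa) inequality: for all points x, y on
the sides and their comparison points in a comparison triangle in M_kappa^2,
d(x,y) <= d(x',y').\<close>
definition CAT :: "real \<Rightarrow> 'a::metric_space itself \<Rightarrow> bool" where
  "CAT \<kappa> (_::'a itself) \<longleftrightarrow>
     (\<forall>x y::'a. below_D \<kappa> (dist x y) \<longrightarrow> (\<exists>\<gamma>. geodesic_seg x y \<gamma>)) \<and>
     (\<forall>(p::'a) q r \<gamma>1 \<gamma>2 \<gamma>3 p' q' r'.
        geodesic_seg p q \<gamma>1 \<and> geodesic_seg q r \<gamma>2 \<and> geodesic_seg r p \<gamma>3 \<and>
        below_D \<kappa> ((dist p q + dist q r + dist r p) / 2) \<and>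
        p' \<in> model_space \<kappa> \<and> q' \<in> model_space \<kappa> \<and> r' \<in> model_space \<kappa> \<and>
        model_dist \<kappa> p' q' = dist p q \<and> model_dist \<kappa> q' r' = dist q r \<and>
        model_dist \<kappa> r' p' = dist r p \<longrightarrow>
        (\<forall>(u, v, \<gamma>, u', v') \<in> {(p, q, \<gamma>1, p', q'), (q, r, \<gamma>2, q', r'), (r, p, \<gamma>3, r', p')}.
         \<forall>(w, z, \<eta>, w', z') \<in> {(p, q, \<gamma>1, p', q'), (q, r, \<gamma>2, q', r'), (r, p, \<gamma>3, r', p')}.
         \<forall>s\<in>{0..dist u v}. \<forall>t\<in>{0..dist w z}. \<forall>x' \<in> model_space \<kappa>. \<forall>y' \<in> model_space \<kappa>.
           model_dist \<kappa> u' x' = s \<and> model_dist \<kappa> x' v' = dist u v - s \<and>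
           model_dist \<kappa> w' y' = t \<and> model_dist \<kappa> y' z' = dist w z - t \<longrightarrow>
           dist (\<gamma> s) (\<eta> t) \<le> model_dist \<kappa> x' y'))"

definition geodesics_from :: "'a::metric_space \<Rightarrow> (real \<Rightarrow> 'a) set" where
  "geodesics_from p = {\<gamma>. \<exists>l>0. geodesic_path l \<gamma> \<and> \<gamma> 0 = p}"

definition cos_angle :: "(real \<Rightarrow> 'a::metric_space) \<Rightarrow> (real \<Rightarrow> 'a) \<Rightarrow> real" where
  "cos_angle \<gamma> \<eta> = Lim (at (0, 0) within ({0<..} \<times> {0<..}))
      (\<lambda>(s, t). (s^2 + t^2 - (dist (\<gamma> s) (\<eta> t))^2) / (2 * s * t))"

definition angle :: "(real \<Rightarrow> 'a::metric_space) \<Rightarrow> (real \<Rightarrow> 'a) \<Rightarrow> real" where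
  "angle \<gamma> \<eta> = arccos (cos_angle \<gamma> \<eta>)"

text \<open>Tangent cone T_p M: elements are represented by pairs (gamma, t) of a geodesic gamma
issuing from p (a representative of its direction) and a length t >= 0; all pairs with t = 0
represent the apex. The conical (pseudo)metric identifies representatives of the same point.\<close>
definition tangent_cone :: "'a::metric_space \<Rightarrow> ((real \<Rightarrow> 'a) \<times> real) set" where
  "tangent_cone p = {(\<gamma>, t). t = 0 \<or> (0 < t \<and> \<gamma> \<in> geodesics_from p)}"

definition apex :: "'a::metric_space \<Rightarrow> (real \<Rightarrow> 'a) \<times> real" where
  "apex p = (\<lambda>_. p, 0)"

definition tnorm :: "(real \<Rightarrow> 'a::metric_space) \<times> real \<Rightarrow> real" where
  "tnorm V = snd V"

definition tinner :: "(real \<Rightarrow> 'a::metric_space) \<times> real \<Rightarrow> (real \<Rightarrow> 'a) \<times> real \<Rightarrow> real" where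
  "tinner V W = tnorm V * tnorm W * cos (angle (fst V) (fst W))"

definition tdist :: "(real \<Rightarrow> 'a::metric_space) \<times> real \<Rightarrow> (real \<Rightarrow> 'a) \<times> real \<Rightarrow> real" where
  "tdist V W = sqrt ((tnorm V)^2 + (tnorm W)^2 - 2 * tinner V W)"

definition unique_shortest :: "'a::metric_space \<Rightarrow> 'a \<Rightarrow> bool" where
  "unique_shortest p v \<longleftrightarrow>
     (\<exists>\<gamma>. geodesic_seg p v \<gamma> \<and> (\<forall>\<eta>. geodesic_seg p v \<eta> \<longrightarrow> (\<forall>s\<in>{0..dist p v}. \<eta> s = \<gamma> s)))"

text \<open>log_p v = d(p,v) gamma_v'(0), i.e. the point of T_p M with direction [gamma_v] and length d(p,v).\<close>
definition logm :: "'a::metric_space \<Rightarrow> 'a \<Rightarrow> (real \<Rightarrow> 'a) \<times> real" where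
  "logm p v = (SOME \<gamma>. geodesic_seg p v \<gamma>, dist p v)"

definition finite_frechet :: "'a::metric_space measure \<Rightarrow> bool" where
  "finite_frechet \<mu> \<longleftrightarrow> (\<forall>p. integrable \<mu> (\<lambda>x. (dist p x)^2))"

definition frechet :: "'a::metric_space measure \<Rightarrow> 'a \<Rightarrow> real" where
  "frechet \<mu> p = (\<integral>x. (dist p x)^2 \<partial>\<mu>) / 2"

definition frechet_mean :: "'a::metric_space measure \<Rightarrow> 'a \<Rightarrow> bool" where
  "frechet_mean \<mu> m \<longleftrightarrow> (\<forall>q. frechet \<mu> m \<le> frechet \<mu> q)"

definition geod_convex_on :: "'a::metric_space set \<Rightarrow> ('a \<Rightarrow> real) \<Rightarrow> bool" where
  "geod_convex_on U F \<longleftrightarrow>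
     (\<forall>L \<gamma>. geodesic_path L \<gamma> \<and> \<gamma> ` {0..L} \<subseteq> U \<longrightarrow> convex_on {0..L} (F \<circ> \<gamma>))"

definition localized :: "'a::metric_space measure \<Rightarrow> 'a \<Rightarrow> bool" where
  "localized \<mu> m \<longleftrightarrow>
     finite_frechet \<mu> \<and> frechet_mean \<mu> m \<and> (\<forall>q. frechet_mean \<mu> q \<longrightarrow> q = m) \<and>
     (\<exists>U. open U \<and> m \<in> U \<and> geod_convex_on U (frechet \<mu>)) \<and>
     (AE x in \<mu>. unique_shortest m x)"

text \<open>Frechet function of the push-forward measure (log_m)_# mu on (T_m M, d_m):
  F(V) = 1/2 \<integral> d_m(V,W)^2 d((log_m)_# mu)(W) = 1/2 \<integral> d_m(V, log_m x)^2 d mu(x).\<close>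
definition tangent_frechet :: "'a::metric_space measure \<Rightarrow> 'a \<Rightarrow> (real \<Rightarrow> 'a) \<times> real \<Rightarrow> ennreal" where
  "tangent_frechet \<mu> m V = (\<integral>\<^sup>+ x. ennreal ((tdist V (logm m x))^2 / 2) \<partial>\<mu>)"

text \<open>V is THE Frechet mean of (log_m)_# mu in T_m M: the Frechet function is finite, V minimises
it, and every minimiser coincides with V as a point of T_m M (distance 0).\<close>
definition tangent_frechet_mean :: "'a::metric_space measure \<Rightarrow> 'a \<Rightarrow> (real \<Rightarrow> 'a) \<times> real \<Rightarrow> bool" where
  "tangent_frechet_mean \<mu> m V \<longleftrightarrow>
     V \<in> tangent_cone m \<and>
     (\<forall>W\<in>tangent_cone m. tangent_frechet \<mu> m W < \<infinity>) \<and>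
     (\<forall>W\<in>tangent_cone m. tangent_frechet \<mu> m V \<le> tangent_frechet \<mu> m W) \<and>
     (\<forall>W\<in>tangent_cone m. tangent_frechet \<mu> m W \<le> tangent_frechet \<mu> m V \<longrightarrow> tdist W V = 0)"

end

theory Submission
  imports Defs
begin

lemma cos_lb: fixes x::real assumes "x \<ge> 0" shows "1 - x^2/2 \<le> cos x"
proof -
  let ?f = "\<lambda>x::real. cos x - 1 + x^2/2"
  have "?f 0 \<le> ?f x"
  proof (rule DERIV_nonneg_imp_nondecreasing[OF assms])
    fix y::real assume "0 \<le> y" "y \<le> x"
    show "\<exists>d. DERIV ?f y :> d \<and> d \<ge> 0"
      using sin_x_le_x[OF \<open>0 \<le> y\<close>]
      by (intro exI[of _ "- sin y + y"] conjI) (auto intro!: derivative_eq_intros)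
  qed
  then show ?thesis by simp
qed

lemma sin_lb: fixes x::real assumes "x \<ge> 0" shows "x - x^3/6 \<le> sin x"
proof -
  let ?f = "\<lambda>x::real. sin x - x + x^3/6"
  have "?f 0 \<le> ?f x"
  proof (rule DERIV_nonneg_imp_nondecreasing[OF assms])
    fix y::real assume "0 \<le> y" "y \<le> x"
    show "\<exists>d. DERIV ?f y :> d \<and> d \<ge> 0"
      using cos_lb[OF \<open>0 \<le> y\<close>]
      by (intro exI[of _ "cos y - 1 + y^2/2"] conjI) (auto intro!: derivative_eq_intros simp: power2_eq_square power3_eq_cube)
  qed
  then show ?thesis by simp
qed

lemma sinh_ge: fixes x::real assumes "x \<ge> 0" shows "x \<le> sinh x"
proof -
  let ?f = "\<lambda>x::real. sinh x - x"
  have "?f 0 \<le> ?f x"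
  proof (rule DERIV_nonneg_imp_nondecreasing[OF assms])
    fix y::real assume "0 \<le> y" "y \<le> x"
    show "\<exists>d. DERIV ?f y :> d \<and> d \<ge> 0"
      using cosh_real_ge_1[of y]
      by (intro exI[of _ "cosh y - 1"] conjI) (auto intro!: derivative_eq_intros)
  qed
  then show ?thesis by simp
qed

lemma sinh_le_xcosh: fixes x::real assumes "x \<ge> 0" shows "sinh x \<le> x * cosh x"
proof -
  let ?f = "\<lambda>x::real. x * cosh x - sinh x"
  have "?f 0 \<le> ?f x"
  proof (rule DERIV_nonneg_imp_nondecreasing[OF assms])
    fix y::real assume "0 \<le> y" "y \<le> x"
    show "\<exists>d. DERIV ?f y :> d \<and> d \<ge> 0"
      using sinh_ge[OF \<open>0 \<le> y\<close>] \<open>0 \<le> y\<close>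
      by (intro exI[of _ "y * sinh y"] conjI) (auto intro!: derivative_eq_intros)
  qed
  then show ?thesis by simp
qed

lemma cosh_le_xsinh: fixes x::real assumes "x \<ge> 0" shows "cosh x - 1 \<le> x * sinh x"
proof -
  let ?f = "\<lambda>x::real. x * sinh x - cosh x + 1"
  have "?f 0 \<le> ?f x"
  proof (rule DERIV_nonneg_imp_nondecreasing[OF assms])
    fix y::real assume "0 \<le> y" "y \<le> x"
    show "\<exists>d. DERIV ?f y :> d \<and> d \<ge> 0"
      using cosh_real_ge_1[of y] \<open>0 \<le> y\<close>
      by (intro exI[of _ "y * cosh y"] conjI) (auto intro!: derivative_eq_intros)
  qed
  then show ?thesis by simp
qed

lemma sinh_ub: fixes x::real assumes "0 \<le> x" "x \<le> 1" shows "sinh x \<le> x + cosh 1 * x^3"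
proof -
  have "sinh x - x \<le> x * (cosh x - 1)" using sinh_le_xcosh[OF assms(1)] by (simp add: algebra_simps)
  also have "\<dots> \<le> x * (x * sinh x)" using cosh_le_xsinh[OF assms(1)] assms(1) by (simp add: mult_left_mono)
  also have "\<dots> \<le> x * (x * (x * cosh x))" using sinh_le_xcosh[OF assms(1)] assms(1) by (simp add: mult_left_mono)
  also have "\<dots> \<le> x * (x * (x * cosh 1))"
    using assms cosh_real_nonneg_le_iff[of x 1] by (simp add: mult_left_mono)
  finally show ?thesis by (simp add: power3_eq_cube algebra_simps)
qed


lemma mvt_bound:
  fixes \<psi> \<psi>' :: "real \<Rightarrow> real"
  assumes "a \<le> b" "\<psi> a = 0" "\<And>x. (\<psi> has_real_derivative \<psi>' x) (at x)"
    "\<And>z. a \<le> z \<Longrightarrow> z \<le> b \<Longrightarrow> \<bar>\<psi>' z\<bar> \<le> M"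
  shows "\<bar>\<psi> b\<bar> \<le> (b - a) * M"
proof (cases "a = b")
  case True then show ?thesis using assms by simp
next
  case False
  then have "a < b" using assms by simp
  from MVT2[OF this, of \<psi> \<psi>'] assms(3) obtain z where z: "a < z" "z < b" "\<psi> b - \<psi> a = (b - a) * \<psi>' z" by blast
  have "\<bar>\<psi> b\<bar> = (b - a) * \<bar>\<psi>' z\<bar>" using z assms(2) \<open>a<b\<close> by (simp add: abs_mult)
  also have "\<dots> \<le> (b - a) * M" using assms(4)[of z] z \<open>a<b\<close> by (intro mult_left_mono) auto
  finally show ?thesis .
qed

lemma min_bound:
  fixes u v \<alpha> :: real
  assumes "0 < u" "0 < v" "\<alpha> \<le> u + v"
  shows "(\<alpha> - \<bar>u - v\<bar>) * (u + v) \<le> 4 * u * v"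
proof -
  have "(\<alpha> - \<bar>u - v\<bar>) * (u + v) \<le> (u + v - \<bar>u - v\<bar>) * (u + v)"
    using assms by (intro mult_right_mono) auto
  also have "\<dots> \<le> 4 * u * v"
    using assms by (cases "u \<le> v") (auto simp: algebra_simps power2_eq_square intro: mult_left_mono mult_right_mono)
  finally show ?thesis .
qed

lemma sph_bound:
  fixes u v \<alpha> :: real
  assumes u: "0 < u" "u \<le> 1/2" and v: "0 < v" "v \<le> 1/2" and a: "\<bar>u - v\<bar> \<le> \<alpha>" "\<alpha> \<le> u + v"
  shows "abs ((u^2+v^2-\<alpha>^2)/(2 * u * v) - (cos \<alpha> - cos u * cos v)/(sin u * sin v)) \<le> 4 * (u+v)^2"
proof -
  have uu: "u * u \<le> 1/4" using mult_mono[of u "1/2" u "1/2"] u by simp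
  have vv: "v * v \<le> 1/4" using mult_mono[of v "1/2" v "1/2"] v by simp
  have su: "sin u > 0" using u pi_gt3 by (intro sin_gt_zero) auto
  have sv: "sin v > 0" using v pi_gt3 by (intro sin_gt_zero) auto
  have su': "u - u^3/6 \<le> sin u" "v - v^3/6 \<le> sin v" using sin_lb u v by auto
  define P where "P = u * v/(sin u * sin v)"
  have P1: "1 \<le> P" using sin_x_le_x[of u] sin_x_le_x[of v] u v su sv
    unfolding P_def by (simp add: mult_mono)
  have P2: "P - 1 \<le> (u+v)^2"
  proof -
    have pos: "0 < u * (u * (u * (v * (v * v))))" using u v by simp
    have "u * v * (1 - (u^2+v^2)/6) \<le> (u - u^3/6) * (v - v^3/6)"
      using u v 
      apply (simp add: algebra_simps power2_eq_square power3_eq_cube)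
      using pos by (simp add: add_divide_distrib)
    also have "\<dots> \<le> sin u * sin v"
    proof -
      have "v * v \<le> 6" using v mult_mono[of v 1 v 1] by simp
      then show ?thesis using su' u v su by (intro mult_mono) (auto simp: power3_eq_cube)
    qed
    finally have h: "u * v * (1 - (u^2+v^2)/6) \<le> sin u * sin v" .
    have w: "(u^2+v^2)/6 \<le> 1/12" using uu vv by (simp add: power2_eq_square)
    have "P \<le> 1/(1 - (u^2+v^2)/6)"
      unfolding P_def using h u v w su sv by (simp add: divide_simps mult_pos_pos)
    also have "\<dots> \<le> 1 + 2 * ((u^2+v^2)/6)"
    proof -
      have "\<And>W::real. 0 \<le> W \<Longrightarrow> W \<le> 1/12 \<Longrightarrow> 1/(1-W) \<le> 1 + 2*W"
      proof -
        fix W::real assume W: "0 \<le> W" "W \<le> 1/12"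
        have "0 \<le> W*(1-2*W)" using W by simp
        moreover have "(1+2*W)*(1-W) = 1 + W*(1-2*W)" by (simp add: algebra_simps)
        ultimately show "1/(1-W) \<le> 1 + 2*W" using W by (simp add: divide_simps)
      qed
      from this[of "(u^2+v^2)/6"] show ?thesis using w by simp
    qed
    finally have "P \<le> 1 + 2 * ((u^2+v^2)/6)" .
    moreover have "(u^2+v^2)/3 \<le> (u+v)^2" using mult_pos_pos[OF u(1) v(1)] by (simp add: power2_eq_square algebra_simps)
    ultimately show ?thesis by linarith
  qed
  define \<psi> where "\<psi> = (\<lambda>\<beta>. \<beta>^2 - (u-v)^2 - 2 * P * (cos (u - v) - cos \<beta>))"
  define \<psi>' where "\<psi>' = (\<lambda>\<beta>::real. 2 * \<beta> - 2 * P * sin \<beta>)"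
  have d: "\<And>x. (\<psi> has_real_derivative \<psi>' x) (at x)"
    unfolding \<psi>_def \<psi>'_def by (auto intro!: derivative_eq_intros)
  have "cos \<bar>u - v\<bar> = cos (u - v)" using cos_minus[of "u - v"] cosh_minus[of "u - v"] by (cases "u - v \<ge> 0") (auto simp: abs_if)
  then have \<psi>0: "\<psi> \<bar>u - v\<bar> = 0" unfolding \<psi>_def by simp
  have bd: "\<bar>\<psi>' z\<bar> \<le> 2 * (u+v)^3" if "\<bar>u - v\<bar> \<le> z" "z \<le> u + v" for z
  proof -
    have z0: "0 \<le> z" using that by linarith
    have sz: "0 \<le> sin z" using z0 that u v pi_gt3 by (intro sin_ge_zero) auto
    have "1 * sin z \<le> P * sin z" using P1 sz by (rule mult_right_mono)
    then have up: "z - P * sin z \<le> z^3/6" using sin_lb[OF z0] by simp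
    have "z^3 \<le> (u+v)^3" using that z0 by (intro power_mono) auto
    moreover have "0 \<le> (u+v)^3" using u v by simp
    ultimately have "z^3/6 \<le> (u+v)^3" by linarith
    have lo0: "P * sin z \<le> P * z" using sin_x_le_x[OF z0] P1 by (intro mult_left_mono) auto
    have lo: "-((P - 1) * z) \<le> z - P * sin z" using lo0 by (simp add: algebra_simps)
    have "(P-1) * z \<le> (u+v)^2 * (u+v)" using P1 P2 z0 that by (intro mult_mono) auto
    then have "(P-1)*z \<le> (u+v)^3" by (simp add: power3_eq_cube power2_eq_square)
    then show ?thesis unfolding \<psi>'_def using up lo \<open>z^3/6 \<le> (u+v)^3\<close>
      unfolding abs_le_iff by linarith
  qed
  have "\<bar>\<psi> \<alpha>\<bar> \<le> (\<alpha> - \<bar>u - v\<bar>) * (2 * (u+v)^3)"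
    by (rule mvt_bound[OF a(1) \<psi>0 d]) (use bd a in auto)
  also have "\<dots> = ((\<alpha> - \<bar>u - v\<bar>) * (u+v)) * (2 * (u+v)^2)" by (simp add: power2_eq_square power3_eq_cube)
  also have "\<dots> \<le> (4 * u * v) * (2 * (u+v)^2)" using min_bound[OF u(1) v(1) a(2)] by (intro mult_right_mono) auto
  finally have b1: "\<bar>\<psi> \<alpha>\<bar> \<le> 8 * u * v * (u+v)^2" by simp
  have eq: "(u^2+v^2-\<alpha>^2)/(2 * u * v) - (cos \<alpha> - cos u * cos v)/(sin u * sin v) = - \<psi> \<alpha> / (2 * u * v)"
    unfolding \<psi>_def P_def using u v su sv
    by (simp add: cos_diff divide_simps power2_eq_square) (simp add: algebra_simps)
  show ?thesis unfolding eq using b1 u v by (simp add: abs_div divide_le_eq abs_minus_cancel) (simp add: algebra_simps)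
qed


lemma hyp_bound:
  fixes u v \<alpha> :: real
  assumes u: "0 < u" "u \<le> 1/2" and v: "0 < v" "v \<le> 1/2" and a: "\<bar>u - v\<bar> \<le> \<alpha>" "\<alpha> \<le> u + v"
  shows "abs ((u^2+v^2-\<alpha>^2)/(2 * u * v) - (cosh u * cosh v - cosh \<alpha>)/(sinh u * sinh v))
          \<le> 4 * (cosh 1 + (cosh 1)^2) * (u+v)^2"
proof -
  define c where "c = cosh (1::real)"
  define K where "K = c + c^2"
  have c1: "1 \<le> c" unfolding c_def by (rule cosh_real_ge_1)
  have K: "c \<le> K" "0 \<le> K" unfolding K_def using c1 by auto
  have uu: "u * u \<le> 1/4" using mult_mono[of u "1/2" u "1/2"] u by simp
  have vv: "v * v \<le> 1/4" using mult_mono[of v "1/2" v "1/2"] v by simp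
  have su: "u \<le> sinh u" "v \<le> sinh v" using sinh_ge u v by auto
  have su2: "sinh u \<le> u * (1 + c * u^2)" "sinh v \<le> v * (1 + c * v^2)"
    using sinh_ub[of u] sinh_ub[of v] u v unfolding c_def by (auto simp: power2_eq_square power3_eq_cube algebra_simps)
  have sp: "0 < sinh u * sinh v" using su u v by (simp add: mult_pos_pos)
  define Q where "Q = u * v / (sinh u * sinh v)"
  have uvle: "u * v \<le> sinh u * sinh v" using su u v by (intro mult_mono) auto
  have Q1: "Q \<le> 1" "0 < Q" unfolding Q_def using uvle sp u v by (auto simp: divide_simps)
  have Q2: "1 - Q \<le> K * (u+v)^2"
  proof -
    have "1 - Q = (sinh u * sinh v - u * v)/(sinh u * sinh v)" unfolding Q_def using sp u v by (simp add: divide_simps)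
    also have "\<dots> \<le> (sinh u * sinh v - u * v)/(u * v)"
      using uvle u v by (intro divide_left_mono) (auto simp: mult_pos_pos)
    also have "\<dots> \<le> (u * (1 + c * u^2) * (v * (1 + c * v^2)) - u * v)/(u * v)"
      using su2 u v su c1 by (intro divide_right_mono diff_right_mono mult_mono) (auto simp: mult_nonneg_nonneg)
    also have "\<dots> = c * u^2 + c * v^2 + c^2 * (u^2 * v^2)" using u v by (simp add: field_simps power2_eq_square)
    also have "\<dots> \<le> c * (u+v)^2 + c^2 * (u+v)^2"
    proof -
      have "c * u^2 + c * v^2 \<le> c * (u+v)^2" using c1 mult_pos_pos[OF u(1) v(1)]
        by (simp add: power2_eq_square algebra_simps)
      moreover have "u^2 * v^2 \<le> (u+v)^2"
      proof -
        have "u^2 * v^2 \<le> u^2 * 1" using vv v by (intro mult_left_mono) (auto simp: power2_eq_square)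
        also have "\<dots> \<le> (u+v)^2" using u v by (simp add: power2_eq_square algebra_simps)
        finally show ?thesis .
      qed
      then have "c^2 * (u^2 * v^2) \<le> c^2 * (u+v)^2" by (intro mult_left_mono) auto
      ultimately show ?thesis by linarith
    qed
    finally show ?thesis unfolding K_def by (simp add: algebra_simps)
  qed
  define \<psi> where "\<psi> = (\<lambda>\<beta>. \<beta>^2 - (u-v)^2 - 2 * Q * (cosh \<beta> - cosh (u - v)))"
  define \<psi>' where "\<psi>' = (\<lambda>\<beta>::real. 2 * \<beta> - 2 * Q * sinh \<beta>)"
  have d: "\<And>x. (\<psi> has_real_derivative \<psi>' x) (at x)"
    unfolding \<psi>_def \<psi>'_def by (auto intro!: derivative_eq_intros)
  have "cosh \<bar>u - v\<bar> = cosh (u - v)" using cos_minus[of "u - v"] cosh_minus[of "u - v"] by (cases "u - v \<ge> 0") (auto simp: abs_if)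
  then have \<psi>0: "\<psi> \<bar>u - v\<bar> = 0" unfolding \<psi>_def by simp
  have bd: "\<bar>\<psi>' z\<bar> \<le> 2 * (K * (u+v)^3)" if "\<bar>u - v\<bar> \<le> z" "z \<le> u + v" for z
  proof -
    have z0: "0 \<le> z" using that by linarith
    have z1: "z \<le> 1" using that u v by linarith
    have "Q * z \<le> Q * sinh z" using sinh_ge[OF z0] Q1 by (intro mult_left_mono) auto
    then have up: "z - Q * sinh z \<le> (1 - Q) * z" by (simp add: algebra_simps)
    have "(1 - Q) * z \<le> (K * (u+v)^2) * (u+v)" using Q1 Q2 z0 that by (intro mult_mono) auto
    then have up2: "z - Q * sinh z \<le> K * (u+v)^3" using up by (simp add: power2_eq_square power3_eq_cube)
    have "Q * sinh z \<le> 1 * sinh z" using Q1 sinh_ge[OF z0] z0 by (intro mult_right_mono) auto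
    then have lo: "z - sinh z \<le> z - Q * sinh z" by simp
    have "sinh z \<le> z + c * z^3" using sinh_ub[OF z0 z1] unfolding c_def .
    moreover have "c * z^3 \<le> K * (u+v)^3" using K z0 that c1 by (intro mult_mono power_mono) auto
    ultimately have lo2: "- (K * (u+v)^3) \<le> z - Q * sinh z" using lo by linarith
    show ?thesis unfolding \<psi>'_def using up2 lo2 by (simp add: abs_le_iff)
  qed
  have "\<bar>\<psi> \<alpha>\<bar> \<le> (\<alpha> - \<bar>u - v\<bar>) * (2 * (K * (u+v)^3))"
    by (rule mvt_bound[OF a(1) \<psi>0 d]) (use bd a in auto)
  also have "\<dots> = ((\<alpha> - \<bar>u - v\<bar>) * (u+v)) * (2 * K * (u+v)^2)" by (simp add: power2_eq_square power3_eq_cube)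
  also have "\<dots> \<le> (4 * u * v) * (2 * K * (u+v)^2)" using min_bound[OF u(1) v(1) a(2)] K by (intro mult_right_mono) auto
  finally have b1: "\<bar>\<psi> \<alpha>\<bar> \<le> 8 * u * v * (K * (u+v)^2)" by simp
  have eq: "(u^2+v^2-\<alpha>^2)/(2 * u * v) - (cosh u * cosh v - cosh \<alpha>)/(sinh u * sinh v) = - \<psi> \<alpha> / (2 * u * v)"
    unfolding \<psi>_def Q_def using u v sp
    by (simp add: cosh_diff divide_simps power2_eq_square) (simp add: algebra_simps)
  have "abs (- \<psi> \<alpha> / (2 * u * v)) \<le> 4 * K * (u+v)^2" using b1 u v
    by (simp add: abs_div divide_le_eq abs_minus_cancel) (simp add: algebra_simps)
  then show ?thesis unfolding eq K_def c_def by simp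
qed


lemma sph_C:
  fixes u v \<alpha> :: real
  assumes u: "0 < u" "u \<le> 1/2" and v: "0 < v" "v \<le> 1/2" and a: "\<bar>u - v\<bar> \<le> \<alpha>" "\<alpha> \<le> u + v"
  defines "C \<equiv> (cos \<alpha> - cos u * cos v)/(sin u * sin v)"
  shows "-1 \<le> C \<and> C \<le> 1 \<and> arccos (cos u * cos v + sin u * sin v * C) = \<alpha>"
proof -
  have su: "sin u > 0" using u pi_gt3 by (intro sin_gt_zero) auto
  have sv: "sin v > 0" using v pi_gt3 by (intro sin_gt_zero) auto
  have sp: "sin u * sin v > 0" using su sv by simp
  have pi: "u + v \<le> pi" using u v pi_gt3 by linarith
  have "cos \<bar>u - v\<bar> = cos (u - v)" using cos_minus[of "u - v"] by (cases "u - v \<ge> 0") (auto simp: abs_if)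
  moreover have "cos \<alpha> \<le> cos \<bar>u - v\<bar>" using a pi by (intro cos_monotone_0_pi_le) auto
  ultimately have c1: "cos \<alpha> - cos u * cos v \<le> sin u * sin v" by (simp add: cos_diff)
  have "cos (u + v) \<le> cos \<alpha>" using a pi by (intro cos_monotone_0_pi_le) auto
  then have c2: "- (sin u * sin v) \<le> cos \<alpha> - cos u * cos v" by (simp add: cos_add)
  have "C \<le> 1" unfolding C_def using c1 sp by (simp add: divide_simps)
  moreover have "-1 \<le> C" unfolding C_def using c2 sp by (simp add: divide_simps)
  moreover have "cos u * cos v + sin u * sin v * C = cos \<alpha>" unfolding C_def using su sv by simp
  moreover have "arccos (cos \<alpha>) = \<alpha>" using a pi by (intro arccos_cos) auto
  ultimately show ?thesis by simp
qed

lemma sph_mono: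
  fixes u v \<beta> c :: real
  assumes u: "0 < u" "u \<le> 1/2" and v: "0 < v" "v \<le> 1/2" and c: "-1 \<le> c" "c \<le> 1"
    and b: "0 \<le> \<beta>" "\<beta> \<le> arccos (cos u * cos v + sin u * sin v * c)"
  shows "c \<le> (cos \<beta> - cos u * cos v)/(sin u * sin v)"
proof -
  have su: "sin u > 0" using u pi_gt3 by (intro sin_gt_zero) auto
  have sv: "sin v > 0" using v pi_gt3 by (intro sin_gt_zero) auto
  have sp: "sin u * sin v > 0" using su sv by simp
  define X where "X = cos u * cos v + sin u * sin v * c"
  have "sin u * sin v * c \<le> sin u * sin v" using c sp by (simp add: mult_left_le)
  then have "X \<le> cos (u - v)" unfolding X_def by (simp add: cos_diff)
  then have X1: "X \<le> 1" using cos_le_one[of "u - v"] by linarith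
  have "- (sin u * sin v) \<le> sin u * sin v * c" using c sp
    by (metis minus_mult_minus mult.right_neutral mult_left_mono mult_minus_right neg_le_iff_le less_le)
  then have "cos (u + v) \<le> X" unfolding X_def by (simp add: cos_add)
  then have X2: "-1 \<le> X" using cos_ge_minus_one[of "u + v"] by linarith
  have "cos (arccos X) \<le> cos \<beta>" using b arccos_ubound[OF X2 X1] unfolding X_def[symmetric]
    by (intro cos_monotone_0_pi_le) auto
  then have "X \<le> cos \<beta>" using cos_arccos[OF X2 X1] by simp
  then show ?thesis unfolding X_def using sp by (simp add: divide_simps mult.commute)
qed

lemma hyp_C:
  fixes u v \<alpha> :: real
  assumes u: "0 < u" and v: "0 < v" and a: "\<bar>u - v\<bar> \<le> \<alpha>" "\<alpha> \<le> u + v"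
  defines "C \<equiv> (cosh u * cosh v - cosh \<alpha>)/(sinh u * sinh v)"
  shows "-1 \<le> C \<and> C \<le> 1 \<and> arcosh (cosh u * cosh v - sinh u * sinh v * C) = \<alpha>"
proof -
  have sp: "sinh u * sinh v > 0" using u v by simp
  have "cosh \<bar>u - v\<bar> = cosh (u - v)" using cosh_minus[of "u - v"] by (cases "u - v \<ge> 0") (auto simp: abs_if)
  moreover have "cosh \<bar>u - v\<bar> \<le> cosh \<alpha>" using a by (subst cosh_real_nonneg_le_iff) auto
  ultimately have c1: "cosh u * cosh v - cosh \<alpha> \<le> sinh u * sinh v" by (simp add: cosh_diff)
  have "cosh \<alpha> \<le> cosh (u + v)" using a u v by (subst cosh_real_nonneg_le_iff) auto
  then have c2: "- (sinh u * sinh v) \<le> cosh u * cosh v - cosh \<alpha>" by (simp add: cosh_add)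
  have "C \<le> 1" unfolding C_def using c1 sp by (simp add: divide_simps)
  moreover have "-1 \<le> C" unfolding C_def using c2 sp by (simp add: divide_simps)
  moreover have "cosh u * cosh v - sinh u * sinh v * C = cosh \<alpha>" unfolding C_def using u v by simp
  moreover have "arcosh (cosh \<alpha>) = \<alpha>" using a by (intro arcosh_cosh_real) auto
  ultimately show ?thesis by simp
qed

lemma hyp_mono:
  fixes u v \<beta> c :: real
  assumes u: "0 < u" and v: "0 < v" and c: "-1 \<le> c" "c \<le> 1"
    and b: "0 \<le> \<beta>" "\<beta> \<le> arcosh (cosh u * cosh v - sinh u * sinh v * c)"
  shows "c \<le> (cosh u * cosh v - cosh \<beta>)/(sinh u * sinh v)"
proof -
  have sp: "sinh u * sinh v > 0" using u v by simp
  define X where "X = cosh u * cosh v - sinh u * sinh v * c"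
  have "sinh u * sinh v * c \<le> sinh u * sinh v" using c sp by (simp add: mult_left_le)
  then have "cosh (u - v) \<le> X" unfolding X_def by (simp add: cosh_diff)
  then have X1: "1 \<le> X" using cosh_real_ge_1[of "u - v"] by linarith
  have "cosh \<beta> \<le> cosh (arcosh X)" using b X1 unfolding X_def[symmetric]
    by (subst cosh_real_nonneg_le_iff) auto
  then have "cosh \<beta> \<le> X" using X1 by simp
  then show ?thesis unfolding X_def using sp by (simp add: divide_simps mult.commute)
qed

lemma euc_C:
  fixes s t a :: real
  assumes s: "0 < s" and t: "0 < t" and a: "\<bar>s - t\<bar> \<le> a" "a \<le> s + t"
  defines "C \<equiv> (s^2 + t^2 - a^2)/(2 * s * t)"
  shows "-1 \<le> C \<and> C \<le> 1 \<and> sqrt (s^2 + t^2 - 2 * s * t * C) = a"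
proof -
  have a0: "0 \<le> a" using a by linarith
  have "\<bar>s - t\<bar>^2 \<le> a^2" using a by (intro power_mono) auto
  then have c1: "s^2 + t^2 - a^2 \<le> 2 * s * t" by (simp add: power2_eq_square algebra_simps)
  have "a^2 \<le> (s+t)^2" using a a0 by (intro power_mono) auto
  then have c2: "- (2 * s * t) \<le> s^2 + t^2 - a^2" by (simp add: power2_eq_square algebra_simps)
  have sp: "0 < 2 * s * t" using s t by simp
  have "C \<le> 1" unfolding C_def using c1 sp by (simp add: divide_simps)
  moreover have "-1 \<le> C" unfolding C_def using c2 sp by (simp add: divide_simps)
  moreover have "s^2 + t^2 - 2 * s * t * C = a^2" unfolding C_def using s t by simp
  ultimately show ?thesis using a0 by simp
qed

lemma euc_mono:
  fixes s t b c :: real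
  assumes s: "0 < s" and t: "0 < t" and c: "-1 \<le> c" "c \<le> 1"
    and b: "0 \<le> b" "b \<le> sqrt (s^2 + t^2 - 2 * s * t * c)"
  shows "c \<le> (s^2 + t^2 - b^2)/(2 * s * t)"
proof -
  have sp: "0 < 2 * s * t" using s t by simp
  have "2 * s * t * c \<le> 2 * s * t" using c sp by (simp add: mult_left_le)
  moreover have "2 * s * t \<le> s^2 + t^2" using zero_le_power2[of "s - t"] unfolding power2_diff by linarith
  ultimately have R: "0 \<le> s^2 + t^2 - 2 * s * t * c" by linarith
  have "b^2 \<le> (sqrt (s^2 + t^2 - 2 * s * t * c))^2" using b by (intro power_mono) auto
  then have "b^2 \<le> s^2 + t^2 - 2 * s * t * c" using R by simp
  then have "c * (2 * s * t) \<le> s^2 + t^2 - b^2" by (simp add: algebra_simps)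
  then show ?thesis using pos_le_divide_eq[OF sp] by simp
qed


definition law :: "real \<Rightarrow> real \<Rightarrow> real \<Rightarrow> real \<Rightarrow> real" where
  "law \<kappa> \<sigma>1 \<sigma>2 c =
    (if \<kappa> = 0 then sqrt (\<sigma>1^2 + \<sigma>2^2 - 2*\<sigma>1*\<sigma>2*c)
     else if \<kappa> > 0 then arccos (cos (sqrt \<kappa>*\<sigma>1)*cos (sqrt \<kappa>*\<sigma>2) + sin (sqrt \<kappa>*\<sigma>1) * sin (sqrt \<kappa>*\<sigma>2)*c) / sqrt \<kappa>
     else arcosh (cosh (sqrt (-\<kappa>)*\<sigma>1)*cosh (sqrt (-\<kappa>)*\<sigma>2) - sinh (sqrt (-\<kappa>)*\<sigma>1) * sinh (sqrt (-\<kappa>)*\<sigma>2)*c) / sqrt (-\<kappa>))"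

definition mpt :: "real \<Rightarrow> real \<Rightarrow> real \<Rightarrow> real \<Rightarrow> real^3" where
  "mpt \<kappa> \<sigma> c s =
    (if \<kappa> = 0 then vector [\<sigma>*c, \<sigma>* s, 0]
     else if \<kappa> > 0 then vector [sin (sqrt \<kappa>*\<sigma>)*c/sqrt \<kappa>, sin (sqrt \<kappa>*\<sigma>)* s/sqrt \<kappa>, cos (sqrt \<kappa>*\<sigma>)/sqrt \<kappa>]
     else vector [sinh (sqrt (-\<kappa>)*\<sigma>)*c/sqrt (-\<kappa>), sinh (sqrt (-\<kappa>)*\<sigma>)* s/sqrt (-\<kappa>), cosh (sqrt (-\<kappa>)*\<sigma>)/sqrt (-\<kappa>)])"

lemma inner3: "(x::real^3) \<bullet> y = x$1*y$1 + x$2*y$2 + x$3*y$3"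
  by (simp add: inner_vec_def sum_3)

lemma mpt_in: assumes "c^2 + s^2 = 1" shows "mpt \<kappa> \<sigma> c s \<in> model_space \<kappa>"
proof -
  consider "\<kappa> = 0" | "\<kappa> > 0" | "\<kappa> < 0" by linarith
  then show ?thesis
  proof cases
    case 1 then show ?thesis by (simp add: mpt_def model_space_def)
  next
    case 2
    let ?k = "sqrt \<kappa>" let ?a = "sin (?k*\<sigma>)" let ?b = "cos (?k*\<sigma>)"
    have k: "?k > 0" "?k^2 = \<kappa>" using 2 by auto
    have "mpt \<kappa> \<sigma> c s \<bullet> mpt \<kappa> \<sigma> c s = (?a^2*(c^2+s^2) + ?b^2)/?k^2"
      using 2 by (simp add: mpt_def inner3 power2_eq_square field_simps)
    also have "\<dots> = 1/\<kappa>" using assms k by (simp add: sin_squared_eq)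
    finally have "norm (mpt \<kappa> \<sigma> c s) = sqrt (1/\<kappa>)" by (simp add: norm_eq_sqrt_inner)
    then show ?thesis using 2 by (simp add: model_space_def real_sqrt_divide)
  next
    case 3
    let ?k = "sqrt (-\<kappa>)" let ?a = "sinh (?k*\<sigma>)" let ?b = "cosh (?k*\<sigma>)"
    have k: "?k > 0" "?k^2 = -\<kappa>" using 3 by auto
    have "(mpt \<kappa> \<sigma> c s $ 1)^2 + (mpt \<kappa> \<sigma> c s $ 2)^2 - (mpt \<kappa> \<sigma> c s $ 3)^2
          = (?a^2*(c^2+s^2) - ?b^2)/?k^2"
      using 3 by (simp add: mpt_def power2_eq_square field_simps)
    also have "\<dots> = 1/\<kappa>" using assms k by (simp add: sinh_square_eq)
    finally show ?thesis using 3 k by (simp add: model_space_def mpt_def)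
  qed
qed

lemma mpt_dist:
  assumes "c1^2 + s1^2 = 1" "c2^2 + s2^2 = 1"
  shows "model_dist \<kappa> (mpt \<kappa> \<sigma>1 c1 s1) (mpt \<kappa> \<sigma>2 c2 s2) = law \<kappa> \<sigma>1 \<sigma>2 (c1*c2+s1* s2)"
proof -
  consider "\<kappa> = 0" | "\<kappa> > 0" | "\<kappa> < 0" by linarith
  then show ?thesis
  proof cases
    case 1
    have "dist (mpt \<kappa> \<sigma>1 c1 s1) (mpt \<kappa> \<sigma>2 c2 s2) = sqrt ((\<sigma>1*c1 - \<sigma>2*c2)^2 + (\<sigma>1* s1-\<sigma>2* s2)^2)"
      using 1 by (simp add: mpt_def dist_norm norm_eq_sqrt_inner inner3 power2_eq_square)
    also have "(\<sigma>1*c1 - \<sigma>2*c2)^2 + (\<sigma>1* s1-\<sigma>2* s2)^2 = \<sigma>1^2*(c1^2+s1^2) + \<sigma>2^2*(c2^2+s2^2) - 2*\<sigma>1*\<sigma>2*(c1*c2+s1* s2)"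
      by (simp add: power2_eq_square algebra_simps)
    finally show ?thesis using 1 assms by (simp add: model_dist_def law_def)
  next
    case 2
    have k: "sqrt \<kappa> > 0" "(sqrt \<kappa>)^2 = \<kappa>" using 2 by auto
    have "\<kappa> * (mpt \<kappa> \<sigma>1 c1 s1 \<bullet> mpt \<kappa> \<sigma>2 c2 s2) =
      cos (sqrt \<kappa>*\<sigma>1)*cos (sqrt \<kappa>*\<sigma>2) + sin (sqrt \<kappa>*\<sigma>1) * sin (sqrt \<kappa>*\<sigma>2)*(c1*c2+s1* s2)"
      using 2 k by (simp add: mpt_def inner3 field_simps power2_eq_square)
    then show ?thesis using 2 by (simp add: model_dist_def law_def)
  next
    case 3
    have k: "sqrt (-\<kappa>) > 0" "(sqrt (-\<kappa>))^2 = -\<kappa>" using 3 by auto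
    have "\<kappa> * ((mpt \<kappa> \<sigma>1 c1 s1 $ 1) * (mpt \<kappa> \<sigma>2 c2 s2 $ 1) + (mpt \<kappa> \<sigma>1 c1 s1 $ 2) * (mpt \<kappa> \<sigma>2 c2 s2 $ 2)
            - (mpt \<kappa> \<sigma>1 c1 s1 $ 3) * (mpt \<kappa> \<sigma>2 c2 s2 $ 3)) =
      cosh (sqrt (-\<kappa>)*\<sigma>1)*cosh (sqrt (-\<kappa>)*\<sigma>2) - sinh (sqrt (-\<kappa>)*\<sigma>1) * sinh (sqrt (-\<kappa>)*\<sigma>2)*(c1*c2+s1* s2)"
    proof -
      have "\<kappa> = -((sqrt (-\<kappa>))^2)" using k by simp
      then show ?thesis using 3 k(1) by (simp add: mpt_def field_simps power2_eq_square)
    qed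
    then show ?thesis using 3 by (simp add: model_dist_def law_def)
  qed
qed


definition kk :: "real \<Rightarrow> real" where "kk \<kappa> = sqrt \<bar>\<kappa>\<bar>"

definition Ck :: "real \<Rightarrow> real \<Rightarrow> real \<Rightarrow> real \<Rightarrow> real" where
  "Ck \<kappa> a s t =
    (if \<kappa> = 0 then (s^2 + t^2 - a^2)/(2 * s * t)
     else if \<kappa> > 0 then (cos (sqrt \<kappa> * a) - cos (sqrt \<kappa> * s) * cos (sqrt \<kappa> * t))/(sin (sqrt \<kappa> * s) * sin (sqrt \<kappa> * t))
     else (cosh (sqrt (-\<kappa>) * s) * cosh (sqrt (-\<kappa>) * t) - cosh (sqrt (-\<kappa>) * a))/(sinh (sqrt (-\<kappa>) * s) * sinh (sqrt (-\<kappa>) * t)))"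

definition KK :: "real \<Rightarrow> real" where "KK \<kappa> = 4 * \<bar>\<kappa>\<bar> * (cosh 1 + (cosh 1)^2)"

lemma scale_E:
  fixes k s t a :: real assumes "k \<noteq> 0"
  shows "((k * s)^2 + (k * t)^2 - (k * a)^2)/(2 * (k * s) * (k * t)) = (s^2 + t^2 - a^2)/(2 * s * t)"
proof -
  have "((k * s)^2 + (k * t)^2 - (k * a)^2) = (k * k) * (s^2 + t^2 - a^2)" by (simp add: power2_eq_square algebra_simps)
  moreover have "2 * (k * s) * (k * t) = (k * k) * (2 * s * t)" by (simp add: algebra_simps)
  moreover have "k * k \<noteq> 0" using assms by simp
  ultimately show ?thesis by simp
qed

lemma law_1:
  assumes "0 \<le> \<sigma>1" "0 \<le> \<sigma>2" "kk \<kappa> * \<sigma>1 \<le> 1/2" "kk \<kappa> * \<sigma>2 \<le> 1/2"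
  shows "law \<kappa> \<sigma>1 \<sigma>2 1 = \<bar>\<sigma>1 - \<sigma>2\<bar>"
proof -
  consider "\<kappa> = 0" | "\<kappa> > 0" | "\<kappa> < 0" by linarith
  then show ?thesis
  proof cases
    case 1
    have "\<sigma>1^2 + \<sigma>2^2 - 2 * \<sigma>1 * \<sigma>2 * 1 = (\<sigma>1 - \<sigma>2)^2" by (simp add: power2_diff)
    then show ?thesis using 1 by (simp add: law_def)
  next
    case 2
    let ?k = "sqrt \<kappa>"
    have k: "?k > 0" "kk \<kappa> = ?k" using 2 by (auto simp: kk_def)
    have "cos (?k * \<sigma>1) * cos (?k * \<sigma>2) + sin (?k * \<sigma>1) * sin (?k * \<sigma>2) * 1 = cos \<bar>?k * \<sigma>1 - ?k * \<sigma>2\<bar>"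
      using cos_minus[of "?k * \<sigma>1 - ?k * \<sigma>2"] by (cases "?k * \<sigma>1 - ?k * \<sigma>2 \<ge> 0") (auto simp: abs_if cos_diff)
    moreover have "arccos (cos \<bar>?k * \<sigma>1 - ?k * \<sigma>2\<bar>) = \<bar>?k * \<sigma>1 - ?k * \<sigma>2\<bar>"
    proof -
      have "0 \<le> ?k * \<sigma>1" "0 \<le> ?k * \<sigma>2" using assms k by auto
      moreover have "?k * \<sigma>1 \<le> 1/2" "?k * \<sigma>2 \<le> 1/2" using assms k by auto
      ultimately have "\<bar>?k * \<sigma>1 - ?k * \<sigma>2\<bar> \<le> pi" using pi_gt3 unfolding abs_le_iff by linarith
      then show ?thesis by (intro arccos_cos) auto
    qed
    moreover have "\<bar>?k * \<sigma>1 - ?k * \<sigma>2\<bar> = ?k * \<bar>\<sigma>1 - \<sigma>2\<bar>" using k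
      by (simp add: abs_mult right_diff_distrib[symmetric])
    ultimately show ?thesis using 2 k by (simp add: law_def)
  next
    case 3
    let ?k = "sqrt (-\<kappa>)"
    have k: "?k > 0" using 3 by auto
    have "cosh (?k * \<sigma>1) * cosh (?k * \<sigma>2) - sinh (?k * \<sigma>1) * sinh (?k * \<sigma>2) * 1 = cosh \<bar>?k * \<sigma>1 - ?k * \<sigma>2\<bar>"
      using cosh_minus[of "?k * \<sigma>1 - ?k * \<sigma>2"] by (cases "?k * \<sigma>1 - ?k * \<sigma>2 \<ge> 0") (auto simp: abs_if cosh_diff)
    moreover have "arcosh (cosh \<bar>?k * \<sigma>1 - ?k * \<sigma>2\<bar>) = \<bar>?k * \<sigma>1 - ?k * \<sigma>2\<bar>"
      by (intro arcosh_cosh_real) auto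
    moreover have "\<bar>?k * \<sigma>1 - ?k * \<sigma>2\<bar> = ?k * \<bar>\<sigma>1 - \<sigma>2\<bar>" using k
      by (simp add: abs_mult right_diff_distrib[symmetric])
    ultimately show ?thesis using 3 k by (simp add: law_def)
  qed
qed

lemma law_0:
  assumes "0 \<le> \<sigma>" "kk \<kappa> * \<sigma> \<le> 1/2"
  shows "law \<kappa> 0 \<sigma> c = \<sigma>" "law \<kappa> \<sigma> 0 c = \<sigma>"
proof -
  have "law \<kappa> 0 \<sigma> c = law \<kappa> 0 \<sigma> 1" "law \<kappa> \<sigma> 0 c = law \<kappa> \<sigma> 0 1" by (simp_all add: law_def)
  then show "law \<kappa> 0 \<sigma> c = \<sigma>" "law \<kappa> \<sigma> 0 c = \<sigma>" using law_1[of 0 \<sigma> \<kappa>] law_1[of \<sigma> 0 \<kappa>] assms by auto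
qed

lemma Ck_law:
  assumes s: "0 < s" "kk \<kappa> * s \<le> 1/2" and t: "0 < t" "kk \<kappa> * t \<le> 1/2" and a: "\<bar>s - t\<bar> \<le> a" "a \<le> s + t"
  shows "-1 \<le> Ck \<kappa> a s t \<and> Ck \<kappa> a s t \<le> 1 \<and> law \<kappa> s t (Ck \<kappa> a s t) = a"
proof -
  consider "\<kappa> = 0" | "\<kappa> > 0" | "\<kappa> < 0" by linarith
  then show ?thesis
  proof cases
    case 1 then show ?thesis using euc_C[OF s(1) t(1) a] by (simp add: Ck_def law_def)
  next
    case 2
    let ?k = "sqrt \<kappa>"
    have k: "?k > 0" "kk \<kappa> = ?k" using 2 by (auto simp: kk_def)
    have a': "\<bar>?k * s - ?k * t\<bar> \<le> ?k * a" "?k * a \<le> ?k * s + ?k * t"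
      using a k by (auto simp: abs_mult right_diff_distrib[symmetric] distrib_left[symmetric])
    from sph_C[of "?k * s" "?k * t" "?k * a"] a' s t k
    show ?thesis using 2 by (simp add: Ck_def law_def)
  next
    case 3
    let ?k = "sqrt (-\<kappa>)"
    have k: "?k > 0" using 3 by auto
    have a': "\<bar>?k * s - ?k * t\<bar> \<le> ?k * a" "?k * a \<le> ?k * s + ?k * t"
      using a k by (auto simp: abs_mult right_diff_distrib[symmetric] distrib_left[symmetric])
    from hyp_C[of "?k * s" "?k * t" "?k * a"] a' s t k
    show ?thesis using 3 by (simp add: Ck_def law_def)
  qed
qed

lemma Ck_mono:
  assumes s: "0 < s" "kk \<kappa> * s \<le> 1/2" and t: "0 < t" "kk \<kappa> * t \<le> 1/2" and c: "-1 \<le> c" "c \<le> 1"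
    and b: "0 \<le> b" "b \<le> law \<kappa> s t c"
  shows "c \<le> Ck \<kappa> b s t"
proof -
  consider "\<kappa> = 0" | "\<kappa> > 0" | "\<kappa> < 0" by linarith
  then show ?thesis
  proof cases
    case 1 then show ?thesis using euc_mono[OF s(1) t(1) c, of b] b by (simp add: Ck_def law_def)
  next
    case 2
    let ?k = "sqrt \<kappa>"
    have k: "?k > 0" "kk \<kappa> = ?k" using 2 by (auto simp: kk_def)
    have "?k * b \<le> arccos (cos (?k * s) * cos (?k * t) + sin (?k * s) * sin (?k * t) * c)"
      using b 2 k by (simp add: law_def pos_le_divide_eq mult.commute)
    from sph_mono[of "?k * s" "?k * t" c "?k * b", OF _ _ _ _ c _ this] s t k b
    show ?thesis using 2 by (simp add: Ck_def)
  next
    case 3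
    let ?k = "sqrt (-\<kappa>)"
    have k: "?k > 0" using 3 by auto
    have "?k * b \<le> arcosh (cosh (?k * s) * cosh (?k * t) - sinh (?k * s) * sinh (?k * t) * c)"
      using b 3 k by (simp add: law_def pos_le_divide_eq mult.commute)
    from hyp_mono[of "?k * s" "?k * t" c "?k * b", OF _ _ c _ this] s t k b
    show ?thesis using 3 by (simp add: Ck_def)
  qed
qed

lemma Ck_E:
  assumes s: "0 < s" "kk \<kappa> * s \<le> 1/2" and t: "0 < t" "kk \<kappa> * t \<le> 1/2" and a: "\<bar>s - t\<bar> \<le> a" "a \<le> s + t"
  shows "\<bar>(s^2 + t^2 - a^2)/(2 * s * t) - Ck \<kappa> a s t\<bar> \<le> KK \<kappa> * (s + t)^2"
proof -
  have c1: "1 \<le> cosh (1::real)" by (rule cosh_real_ge_1)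
  have "0 \<le> (cosh (1::real))^2" by simp
  then have c2: "1 \<le> cosh 1 + (cosh (1::real))^2" using c1 by linarith
  consider "\<kappa> = 0" | "\<kappa> > 0" | "\<kappa> < 0" by linarith
  then show ?thesis
  proof cases
    case 1 then show ?thesis by (simp add: Ck_def KK_def)
  next
    case 2
    let ?k = "sqrt \<kappa>"
    have k: "?k > 0" "kk \<kappa> = ?k" "?k^2 = \<kappa>" using 2 by (auto simp: kk_def)
    have a': "\<bar>?k * s - ?k * t\<bar> \<le> ?k * a" "?k * a \<le> ?k * s + ?k * t"
      using a k by (auto simp: abs_mult right_diff_distrib[symmetric] distrib_left[symmetric])
    have e: "((?k * s)^2 + (?k * t)^2 - (?k * a)^2)/(2 * (?k * s) * (?k * t)) = (s^2 + t^2 - a^2)/(2 * s * t)"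
      using scale_E[of ?k s t a] k by simp
    have "4 * (?k * s + ?k * t)^2 = (4 * \<kappa>) * (s + t)^2" using k by (simp add: power_mult_distrib distrib_left[symmetric])
    also have "\<dots> \<le> KK \<kappa> * (s + t)^2" unfolding KK_def using 2 c2 by (intro mult_right_mono) auto
    finally have "4 * (?k * s + ?k * t)^2 \<le> KK \<kappa> * (s + t)^2" .
    with sph_bound[of "?k * s" "?k * t" "?k * a"] a' s t k e
    show ?thesis using 2 by (simp add: Ck_def)
  next
    case 3
    let ?k = "sqrt (-\<kappa>)"
    have k: "?k > 0" "kk \<kappa> = ?k" "?k^2 = -\<kappa>" using 3 by (auto simp: kk_def)
    have a': "\<bar>?k * s - ?k * t\<bar> \<le> ?k * a" "?k * a \<le> ?k * s + ?k * t"
      using a k by (auto simp: abs_mult right_diff_distrib[symmetric] distrib_left[symmetric])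
    have e: "((?k * s)^2 + (?k * t)^2 - (?k * a)^2)/(2 * (?k * s) * (?k * t)) = (s^2 + t^2 - a^2)/(2 * s * t)"
      using scale_E[of ?k s t a] k by simp
    have h1: "(?k * s + ?k * t)^2 = ?k^2 * (s+t)^2" by (simp only: distrib_left[symmetric] power_mult_distrib)
    have h2: "KK \<kappa> = 4 * (cosh 1 + (cosh 1)^2) * ?k^2" unfolding KK_def k(3) using 3 by simp
    have "4 * (cosh 1 + (cosh 1)^2) * (?k * s + ?k * t)^2 = KK \<kappa> * (s + t)^2"
      unfolding h1 h2 by (simp only: mult.assoc)
    with hyp_bound[of "?k * s" "?k * t" "?k * a"] a' s t k e
    show ?thesis using 3 by (simp add: Ck_def)
  qed
qed


lemma below_D_mono: "below_D \<kappa> r2 \<Longrightarrow> r \<le> r2 \<Longrightarrow> below_D \<kappa> r"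
  unfolding below_D_def by auto

lemma geod_dist: "geodesic_path l \<gamma> \<Longrightarrow> 0 \<le> s \<Longrightarrow> s \<le> l \<Longrightarrow> 0 \<le> t \<Longrightarrow> t \<le> l \<Longrightarrow> dist (\<gamma> s) (\<gamma> t) = \<bar>s - t\<bar>"
  unfolding geodesic_path_def by auto

lemma geod_sub: "geodesic_path l \<gamma> \<Longrightarrow> 0 \<le> s \<Longrightarrow> s \<le> l \<Longrightarrow> geodesic_path s \<gamma>"
  unfolding geodesic_path_def by auto

lemma geod_rev: "geodesic_path l \<eta> \<Longrightarrow> 0 \<le> t \<Longrightarrow> t \<le> l \<Longrightarrow> geodesic_path t (\<lambda>u. \<eta> (t - u))"
  unfolding geodesic_path_def by (auto simp: abs_minus_commute)

lemma cat_cmp: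
  fixes \<gamma> \<eta> :: "real \<Rightarrow> 'a::metric_space"
  assumes cat: "CAT \<kappa> TYPE('a)"
    and g: "geodesic_path l \<gamma>" "\<gamma> 0 = p" and h: "geodesic_path l' \<eta>" "\<eta> 0 = p"
    and s: "0 < s" "s \<le> l" and t: "0 < t" "t \<le> l'" and s': "0 \<le> s'" "s' \<le> s"
    and bD: "below_D \<kappa> (s + t)"
    and M: "p' \<in> model_space \<kappa>" "q' \<in> model_space \<kappa>" "r' \<in> model_space \<kappa>" "x' \<in> model_space \<kappa>"
    and d: "model_dist \<kappa> p' q' = s" "model_dist \<kappa> q' r' = dist (\<gamma> s) (\<eta> t)" "model_dist \<kappa> r' p' = t"
       "model_dist \<kappa> p' x' = s'" "model_dist \<kappa> x' q' = s - s'" "model_dist \<kappa> r' r' = 0"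
  shows "dist (\<gamma> s') (\<eta> t) \<le> model_dist \<kappa> x' r'"
proof -
  have dps: "dist p (\<gamma> s) = s" using geod_dist[OF g(1), of 0 s] g s by simp
  have dtp: "dist (\<eta> t) p = t" using geod_dist[OF h(1), of t 0] h t by simp
  have tri: "dist (\<gamma> s) (\<eta> t) \<le> s + t" using dist_triangle[of "\<gamma> s" "\<eta> t" p] dps dtp by (simp add: dist_commute)
  have H1: "\<forall>x y::'a. below_D \<kappa> (dist x y) \<longrightarrow> (\<exists>\<gamma>. geodesic_seg x y \<gamma>)" using cat unfolding CAT_def by blast
  obtain g2 where g2: "geodesic_seg (\<gamma> s) (\<eta> t) g2" using H1 below_D_mono[OF bD tri] by blast
  have g1: "geodesic_seg p (\<gamma> s) \<gamma>" unfolding geodesic_seg_def dps using geod_sub[OF g(1)] s g by auto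
  have g3: "geodesic_seg (\<eta> t) p (\<lambda>u. \<eta> (t - u))" unfolding geodesic_seg_def dtp using geod_rev[OF h(1)] t h by auto
  have per: "below_D \<kappa> ((dist p (\<gamma> s) + dist (\<gamma> s) (\<eta> t) + dist (\<eta> t) p) / 2)"
    using below_D_mono[OF bD] tri dps dtp by simp
  have C: "geodesic_seg p (\<gamma> s) \<gamma> \<and> geodesic_seg (\<gamma> s) (\<eta> t) g2 \<and> geodesic_seg (\<eta> t) p (\<lambda>u. \<eta> (t - u)) \<and>
    below_D \<kappa> ((dist p (\<gamma> s) + dist (\<gamma> s) (\<eta> t) + dist (\<eta> t) p) / 2) \<and>
    p' \<in> model_space \<kappa> \<and> q' \<in> model_space \<kappa> \<and> r' \<in> model_space \<kappa> \<and>
    model_dist \<kappa> p' q' = dist p (\<gamma> s) \<and> model_dist \<kappa> q' r' = dist (\<gamma> s) (\<eta> t) \<and>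
    model_dist \<kappa> r' p' = dist (\<eta> t) p"
    using g1 g2 g3 per M d dps dtp by simp
  note H = CAT_def[THEN iffD1, THEN conjunct2, rule_format, OF cat C]
  note H2 = H[OF insertI1, unfolded prod.case]
  have mem: "(\<eta> t, p, (\<lambda>u. \<eta> (t - u)), r', p') \<in> {(p, \<gamma> s, \<gamma>, p', q'), (\<gamma> s, \<eta> t, g2, q', r'), (\<eta> t, p, (\<lambda>u. \<eta> (t - u)), r', p')}"
    by simp
  note H3 = bspec[OF H2 mem, unfolded prod.case]
  have s'm: "s' \<in> {0..dist p (\<gamma> s)}" using s' dps by simp
  have t0: "(0::real) \<in> {0..dist (\<eta> t) p}" using dtp t by simp
  note H4 = bspec[OF bspec[OF bspec[OF bspec[OF H3 s'm] t0] M(4)] M(3)]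
  have "dist (\<gamma> s') (\<eta> (t - 0)) \<le> model_dist \<kappa> x' r'"
    by (rule H4[rule_format]) (use d dps dtp in auto)
  then show ?thesis by simp
qed

lemma geod_tri:
  assumes g: "geodesic_path l \<gamma>" "\<gamma> 0 = p" and h: "geodesic_path l' \<eta>" "\<eta> 0 = p"
    and s: "0 \<le> s" "s \<le> l" and t: "0 \<le> t" "t \<le> l'"
  shows "\<bar>s - t\<bar> \<le> dist (\<gamma> s) (\<eta> t) \<and> dist (\<gamma> s) (\<eta> t) \<le> s + t"
proof -
  have dps: "dist p (\<gamma> s) = s" using geod_dist[OF g(1), of 0 s] g s by simp
  have dtp: "dist (\<eta> t) p = t" using geod_dist[OF h(1), of t 0] h t by simp
  show ?thesis using dist_triangle[of "\<gamma> s" "\<eta> t" p] dist_triangle[of p "\<eta> t" "\<gamma> s"]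
      dist_triangle[of p "\<gamma> s" "\<eta> t"] dps dtp
    by (auto simp: dist_commute abs_le_iff)
qed

lemma Ck_mono_s:
  fixes \<gamma> \<eta> :: "real \<Rightarrow> 'a::metric_space"
  assumes cat: "CAT \<kappa> TYPE('a)"
    and g: "geodesic_path l \<gamma>" "\<gamma> 0 = p" and h: "geodesic_path l' \<eta>" "\<eta> 0 = p"
    and s: "0 < s'" "s' \<le> s" "s \<le> l" "kk \<kappa> * s \<le> 1/2" and t: "0 < t" "t \<le> l'" "kk \<kappa> * t \<le> 1/2"
  shows "Ck \<kappa> (dist (\<gamma> s) (\<eta> t)) s t \<le> Ck \<kappa> (dist (\<gamma> s') (\<eta> t)) s' t"
proof -
  define a where "a = dist (\<gamma> s) (\<eta> t)"
  define c where "c = Ck \<kappa> a s t"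
  have k0: "0 \<le> kk \<kappa>" by (simp add: kk_def)
  have s0: "0 < s" using s by linarith
  have ks': "kk \<kappa> * s' \<le> 1/2" using s k0 by (meson mult_left_mono order_trans)
  have tr: "\<bar>s - t\<bar> \<le> a" "a \<le> s + t" using geod_tri[OF g h, of s t] s t unfolding a_def by auto
  have cl: "-1 \<le> c" "c \<le> 1" "law \<kappa> s t c = a" using Ck_law[OF s0 s(4) t(1) t(3) tr] unfolding c_def by auto
  define S where "S = sqrt (1 - c^2)"
  have cS: "c^2 + S^2 = 1"
  proof -
    have "\<bar>c\<bar> \<le> 1" using cl by (simp add: abs_le_iff)
    then have "c^2 \<le> 1" using abs_square_le_1 by blast
    then show ?thesis unfolding S_def by simp
  qed
  have one: "(1::real)^2 + 0^2 = 1" by simp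
  define p' where "p' = mpt \<kappa> 0 1 0"
  define q' where "q' = mpt \<kappa> s 1 0"
  define r' where "r' = mpt \<kappa> t c S"
  define x' where "x' = mpt \<kappa> s' 1 0"
  have M: "p' \<in> model_space \<kappa>" "q' \<in> model_space \<kappa>" "r' \<in> model_space \<kappa>" "x' \<in> model_space \<kappa>"
    unfolding p'_def q'_def r'_def x'_def using mpt_in[OF one] mpt_in[OF cS] by auto
  have d1: "model_dist \<kappa> p' q' = s" unfolding p'_def q'_def mpt_dist[OF one one] using law_0(1)[of s \<kappa>] s by simp
  have d2: "model_dist \<kappa> q' r' = dist (\<gamma> s) (\<eta> t)" unfolding q'_def r'_def mpt_dist[OF one cS] using cl a_def by simp
  have d3: "model_dist \<kappa> r' p' = t" unfolding p'_def r'_def mpt_dist[OF cS one] using law_0(2)[of t \<kappa>] t by simp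
  have d4: "model_dist \<kappa> p' x' = s'" unfolding p'_def x'_def mpt_dist[OF one one] using law_0(1)[of s' \<kappa>] s ks' by simp
  have d5: "model_dist \<kappa> x' q' = s - s'" unfolding q'_def x'_def mpt_dist[OF one one] using law_1[of s' s \<kappa>] s ks' by simp
  have d6: "model_dist \<kappa> r' r' = 0" unfolding r'_def mpt_dist[OF cS cS] using law_1[of t t \<kappa>] t cS
    by (simp add: power2_eq_square)
  have bD: "below_D \<kappa> (s + t)"
  proof (cases "\<kappa> > 0")
    case True
    have "sqrt \<kappa> * (s + t) \<le> 1" using s t True by (simp add: kk_def distrib_left)
    then have "s + t \<le> 1 / sqrt \<kappa>" using True by (simp add: pos_le_divide_eq mult.commute)
    also have "\<dots> < pi / sqrt \<kappa>" using True pi_gt3 by (intro divide_strict_right_mono) auto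
    finally show ?thesis unfolding below_D_def by simp
  qed (simp add: below_D_def)
  have "dist (\<gamma> s') (\<eta> t) \<le> model_dist \<kappa> x' r'"
    by (rule cat_cmp[OF cat g h s0 s(3) t(1) t(2) _ s(2) bD M d1 d2 d3 d4 d5 d6]) (use s in auto)
  also have "model_dist \<kappa> x' r' = law \<kappa> s' t c" unfolding x'_def r'_def mpt_dist[OF one cS] by simp
  finally have "c \<le> Ck \<kappa> (dist (\<gamma> s') (\<eta> t)) s' t"
    by (intro Ck_mono[OF s(1) ks' t(1) t(3) cl(1,2)]) auto
  then show ?thesis unfolding c_def a_def .
qed


lemma lim_mono2:
  fixes E C :: "real \<Rightarrow> real \<Rightarrow> real"
  assumes \<delta>: "0 < \<delta>"
    and bnd: "\<And>s t. 0 < s \<Longrightarrow> s \<le> \<delta> \<Longrightarrow> 0 < t \<Longrightarrow> t \<le> \<delta> \<Longrightarrow> -1 \<le> C s t \<and> C s t \<le> 1"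
    and ms: "\<And>s s' t. 0 < s' \<Longrightarrow> s' \<le> s \<Longrightarrow> s \<le> \<delta> \<Longrightarrow> 0 < t \<Longrightarrow> t \<le> \<delta> \<Longrightarrow> C s t \<le> C s' t"
    and mt: "\<And>s t t'. 0 < s \<Longrightarrow> s \<le> \<delta> \<Longrightarrow> 0 < t' \<Longrightarrow> t' \<le> t \<Longrightarrow> t \<le> \<delta> \<Longrightarrow> C s t \<le> C s t'"
    and eb: "\<And>s t. 0 < s \<Longrightarrow> s \<le> \<delta> \<Longrightarrow> 0 < t \<Longrightarrow> t \<le> \<delta> \<Longrightarrow> \<bar>E s t - C s t\<bar> \<le> K * (s + t)^2"
  shows "\<exists>L. -1 \<le> L \<and> L \<le> 1 \<and> ((\<lambda>(s, t). E s t) \<longlongrightarrow> L) (at (0, 0) within ({0<..} \<times> {0<..}))"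
proof -
  define A where "A = {C s t |s t. 0 < s \<and> s \<le> \<delta> \<and> 0 < t \<and> t \<le> \<delta>}"
  have Ane: "A \<noteq> {}" unfolding A_def using \<delta> by blast
  have Abdd: "bdd_above A" unfolding A_def using bnd by (intro bdd_aboveI[of _ 1]) auto
  define L where "L = Sup A"
  have up: "C s t \<le> L" if "0 < s" "s \<le> \<delta>" "0 < t" "t \<le> \<delta>" for s t
    unfolding L_def by (rule cSup_upper[OF _ Abdd]) (use that in \<open>auto simp: A_def\<close>)
  have L1: "L \<le> 1" unfolding L_def using Ane bnd by (intro cSup_least) (auto simp: A_def)
  have L2: "-1 \<le> L" using up[of \<delta> \<delta>] bnd[of \<delta> \<delta>] \<delta> by auto
  have "((\<lambda>(s, t). E s t) \<longlongrightarrow> L) (at (0, 0) within ({0<..} \<times> {0<..}))"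
  proof (rule tendstoI)
    fix \<epsilon> :: real assume e: "0 < \<epsilon>"
    have "L - \<epsilon>/2 < Sup A" using e unfolding L_def by simp
    then obtain y where "y \<in> A" "L - \<epsilon>/2 < y" using less_cSup_iff[OF Ane Abdd] by blast
    then obtain s0 t0 where st0: "0 < s0" "s0 \<le> \<delta>" "0 < t0" "t0 \<le> \<delta>" "L - \<epsilon>/2 < C s0 t0"
      unfolding A_def by blast
    define d where "d = min (min s0 t0) (min 1 (\<epsilon> / (8 * (\<bar>K\<bar> + 1))))"
    have d0: "0 < d" unfolding d_def using st0 e by (simp add: abs_add_one_gt_zero)
    show "\<forall>\<^sub>F x in at (0, 0) within ({0<..} \<times> {0<..}). dist (case x of (s, t) \<Rightarrow> E s t) L < \<epsilon>"
      unfolding eventually_at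
    proof (intro exI[of _ d] conjI ballI impI d0)
      fix x :: "real \<times> real" assume x: "x \<in> {0<..} \<times> {0<..}" and dx: "x \<noteq> (0, 0) \<and> dist x (0, 0) < d"
      obtain s t where xst: "x = (s, t)" by (cases x)
      have s0: "0 < s" "0 < t" using x xst by auto
      have dd: "dist x (0,0) = sqrt (s^2 + t^2)" unfolding xst by (simp add: dist_Pair_Pair)
      have "s \<le> sqrt (s^2 + t^2)" by (rule real_sqrt_sum_squares_ge1)
      moreover have "t \<le> sqrt (s^2 + t^2)" by (rule real_sqrt_sum_squares_ge2)
      moreover have "dist x (0,0) < d" using dx by simp
      ultimately have sd: "s < d" "t < d" using dd by linarith+
      have sl: "s \<le> s0" "t \<le> t0" "s \<le> \<delta>" "t \<le> \<delta>" using sd st0 unfolding d_def by auto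
      have "C s0 t0 \<le> C s t0" using ms[of s s0 t0] s0 sl st0 by auto
      also have "\<dots> \<le> C s t" using mt[of s t t0] s0 sl st0 by auto
      finally have c1: "L - \<epsilon>/2 < C s t" using st0 by linarith
      have c2: "C s t \<le> L" using up s0 sl by auto
      have "(s + t)^2 \<le> (2 * d)^2" using s0 sd by (intro power_mono) auto
      also have "\<dots> = 4 * d * d" by (simp add: power2_eq_square)
      also have "\<dots> \<le> 4 * d * 1" using d0 unfolding d_def by (intro mult_left_mono) auto
      also have "\<dots> \<le> 4 * (\<epsilon> / (8 * (\<bar>K\<bar> + 1)))" unfolding d_def by simp
      also have "4 * (\<epsilon> / (8 * (\<bar>K\<bar> + 1))) = \<epsilon> / (2 * (\<bar>K\<bar> + 1))" using abs_add_one_gt_zero[of K] by (simp add: divide_simps)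
      finally have st2: "(s + t)^2 \<le> \<epsilon> / (2 * (\<bar>K\<bar> + 1))" .
      have "K * (s + t)^2 \<le> \<bar>K\<bar> * (s + t)^2" by (simp add: mult_right_mono)
      also have "\<dots> \<le> \<bar>K\<bar> * (\<epsilon> / (2 * (\<bar>K\<bar> + 1)))" using st2 by (intro mult_left_mono) auto
      also have "\<dots> < \<epsilon> / 2" using e by (simp add: divide_simps)
      finally have "\<bar>E s t - C s t\<bar> < \<epsilon>/2" using eb[of s t] s0 sl by linarith
      then have h: "E s t - C s t < \<epsilon>/2" "- (\<epsilon>/2) < E s t - C s t" unfolding abs_less_iff by auto
      have "\<bar>E s t - L\<bar> < \<epsilon>" unfolding abs_less_iff using h c1 c2 by (intro conjI; linarith)
      then show "dist (case x of (s, t) \<Rightarrow> E s t) L < \<epsilon>" unfolding xst dist_real_def by simp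
    qed
  qed
  then show ?thesis using L1 L2 by blast
qed


lemma Ck_sym: "Ck \<kappa> a s t = Ck \<kappa> a t s"
  unfolding Ck_def by (simp add: ac_simps)

lemma angle_lim:
  fixes \<gamma> \<eta> :: "real \<Rightarrow> 'a::metric_space"
  assumes cat: "CAT \<kappa> TYPE('a)"
    and g: "geodesic_path l \<gamma>" "0 < l" "\<gamma> 0 = p" and h: "geodesic_path l' \<eta>" "0 < l'" "\<eta> 0 = p"
  shows "\<exists>L. -1 \<le> L \<and> L \<le> 1 \<and>
    ((\<lambda>(s, t). (s^2 + t^2 - (dist (\<gamma> s) (\<eta> t))^2) / (2 * s * t)) \<longlongrightarrow> L) (at (0, 0) within ({0<..} \<times> {0<..}))"
proof -
  have k0: "0 \<le> kk \<kappa>" by (simp add: kk_def)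
  define \<delta> where "\<delta> = min (min l l') (1 / (2 * (kk \<kappa> + 1)))"
  have \<delta>0: "0 < \<delta>" unfolding \<delta>_def using g h k0 by simp
  have \<delta>k: "kk \<kappa> * x \<le> 1/2" if "0 \<le> x" "x \<le> \<delta>" for x
  proof -
    have "x \<le> 1 / (2 * (kk \<kappa> + 1))" using that unfolding \<delta>_def by simp
    then have "x * (2 * (kk \<kappa> + 1)) \<le> 1" using k0 by (simp add: pos_le_divide_eq)
    then show ?thesis using that k0 by (simp add: algebra_simps)
  qed
  have \<delta>l: "\<delta> \<le> l" "\<delta> \<le> l'" unfolding \<delta>_def by auto
  define C where "C = (\<lambda>s t. Ck \<kappa> (dist (\<gamma> s) (\<eta> t)) s t)"
  define E where "E = (\<lambda>s t. (s^2 + t^2 - (dist (\<gamma> s) (\<eta> t))^2) / (2 * s * t))"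
  have tri: "\<bar>s - t\<bar> \<le> dist (\<gamma> s) (\<eta> t) \<and> dist (\<gamma> s) (\<eta> t) \<le> s + t" if "0 < s" "s \<le> \<delta>" "0 < t" "t \<le> \<delta>" for s t
    using geod_tri[OF g(1,3) h(1,3), of s t] that \<delta>l by auto
  have "\<exists>L. -1 \<le> L \<and> L \<le> 1 \<and> ((\<lambda>(s, t). E s t) \<longlongrightarrow> L) (at (0, 0) within ({0<..} \<times> {0<..}))"
  proof (rule lim_mono2[OF \<delta>0, of C E "KK \<kappa>"])
    fix s t :: real assume st: "0 < s" "s \<le> \<delta>" "0 < t" "t \<le> \<delta>"
    show "-1 \<le> C s t \<and> C s t \<le> 1" unfolding C_def
      using Ck_law[of s \<kappa> t] st \<delta>k tri[OF st] by auto
    show "\<bar>E s t - C s t\<bar> \<le> KK \<kappa> * (s + t)^2" unfolding C_def E_def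
      using Ck_E[of s \<kappa> t] st \<delta>k tri[OF st] by auto
  next
    fix s s' t :: real assume st: "0 < s'" "s' \<le> s" "s \<le> \<delta>" "0 < t" "t \<le> \<delta>"
    show "C s t \<le> C s' t" unfolding C_def
      by (rule Ck_mono_s[OF cat g(1,3) h(1,3)]) (use st \<delta>k \<delta>l in auto)
  next
    fix s t t' :: real assume st: "0 < s" "s \<le> \<delta>" "0 < t'" "t' \<le> t" "t \<le> \<delta>"
    have "Ck \<kappa> (dist (\<eta> t) (\<gamma> s)) t s \<le> Ck \<kappa> (dist (\<eta> t') (\<gamma> s)) t' s"
      by (rule Ck_mono_s[OF cat h(1,3) g(1,3)]) (use st \<delta>k \<delta>l in auto)
    then show "C s t \<le> C s t'" unfolding C_def by (simp add: dist_commute Ck_sym[of \<kappa> _ s])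
  qed
  then show ?thesis unfolding E_def .
qed

lemma quad_nontriv: "at ((0::real), (0::real)) within ({0<..} \<times> {0<..}) \<noteq> bot"
proof -
  have "(0::real, 0::real) islimpt ({0<..} \<times> {0<..})"
    unfolding islimpt_approachable
  proof (intro allI impI)
    fix e :: real assume e: "0 < e"
    have "sqrt ((e/4)^2 + (e/4)^2) < sqrt (e^2)"
      using e by (intro real_sqrt_less_mono) (simp add: power2_eq_square)
    then have "dist (e/4, e/4) (0::real, 0::real) < e" using e by (simp add: dist_Pair_Pair)
    note dd = this
    show "\<exists>x'\<in>{0::real<..} \<times> {0::real<..}. x' \<noteq> (0, 0) \<and> dist x' (0, 0) < e"
    proof (rule bexI[where x="(e/4, e/4)"])
      show "(e/4, e/4) \<in> {0<..} \<times> {(0::real)<..}" using e by auto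
      show "(e/4, e/4) \<noteq> (0::real, 0::real) \<and> dist (e/4, e/4) (0::real, 0::real) < e" using e dd by auto
    qed
  qed
  then show ?thesis using trivial_limit_within by blast
qed

lemma cos_angle_lim:
  fixes \<gamma> \<eta> :: "real \<Rightarrow> 'a::metric_space"
  assumes cat: "CAT \<kappa> TYPE('a)"
    and g: "geodesic_path l \<gamma>" "0 < l" "\<gamma> 0 = p" and h: "geodesic_path l' \<eta>" "0 < l'" "\<eta> 0 = p"
  shows "-1 \<le> cos (angle \<gamma> \<eta>) \<and> cos (angle \<gamma> \<eta>) \<le> 1 \<and>
    ((\<lambda>(s, t). (s^2 + t^2 - (dist (\<gamma> s) (\<eta> t))^2) / (2 * s * t)) \<longlongrightarrow> cos (angle \<gamma> \<eta>)) (at (0, 0) within ({0<..} \<times> {0<..}))"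
proof -
  obtain L where L: "-1 \<le> L" "L \<le> 1"
    "((\<lambda>(s, t). (s^2 + t^2 - (dist (\<gamma> s) (\<eta> t))^2) / (2 * s * t)) \<longlongrightarrow> L) (at (0, 0) within ({0<..} \<times> {0<..}))"
    using angle_lim[OF cat g h] by blast
  have "cos_angle \<gamma> \<eta> = L" unfolding cos_angle_def by (rule tendsto_Lim[OF quad_nontriv L(3)])
  then have "cos (angle \<gamma> \<eta>) = L" unfolding angle_def using L by simp
  then show ?thesis using L by simp
qed


lemma first_var:
  fixes \<gamma> \<eta> :: "real \<Rightarrow> 'a::metric_space"
  assumes cat: "CAT \<kappa> TYPE('a)"
    and g: "geodesic_path l \<gamma>" "0 < l" "\<gamma> 0 = m" and h: "geodesic_path d \<eta>" "0 < d" "\<eta> 0 = m" "\<eta> d = x"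
    and e: "0 < \<epsilon>"
  shows "\<exists>\<delta>>0. \<forall>s. 0 < s \<and> s < \<delta> \<longrightarrow> dist (\<gamma> s) x - d \<le> (- cos (angle \<gamma> \<eta>) + \<epsilon>) * s"
proof -
  define L where "L = cos (angle \<gamma> \<eta>)"
  have L: "-1 \<le> L" "L \<le> 1"
    "((\<lambda>(s, t). (s^2 + t^2 - (dist (\<gamma> s) (\<eta> t))^2) / (2 * s * t)) \<longlongrightarrow> L) (at (0, 0) within ({0<..} \<times> {0<..}))"
    using cos_angle_lim[OF cat g h(1,2,3)] unfolding L_def by auto
  define e' where "e' = min \<epsilon> 1"
  have e': "0 < e'" "e' \<le> 1" "e' \<le> \<epsilon>" unfolding e'_def using e by auto
  define lam where "lam = 3 / e' + 2"
  have lam: "2 \<le> lam" "lam * e' = 3 + 2 * e'" unfolding lam_def using e' by (auto simp: field_simps)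
  from tendstoD[OF L(3), of "e'/2"] e'
  have "\<forall>\<^sub>F z in at (0, 0) within ({0<..} \<times> {0<..}). dist ((\<lambda>(s, t). (s^2 + t^2 - (dist (\<gamma> s) (\<eta> t))^2) / (2 * s * t)) z) L < e'/2"
    by simp
  then obtain r where r: "0 < r" and rr: "\<And>z. z \<in> {0<..} \<times> {0<..} \<Longrightarrow> z \<noteq> (0,0) \<Longrightarrow> dist z (0,0) < r \<Longrightarrow>
      dist ((\<lambda>(s, t). (s^2 + t^2 - (dist (\<gamma> s) (\<eta> t))^2) / (2 * s * t)) z) L < e'/2"
    unfolding eventually_at by blast
  define \<delta> where "\<delta> = min l (min (d / lam) (r / (lam + 1)))"
  have \<delta>0: "0 < \<delta>" unfolding \<delta>_def using g h r lam by auto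
  show ?thesis
  proof (intro exI[of _ \<delta>] conjI allI impI \<delta>0)
    fix s :: real assume s: "0 < s \<and> s < \<delta>"
    define t where "t = lam * s"
    have t0: "0 < t" unfolding t_def using s lam by simp
    have td: "t \<le> d" unfolding t_def using s lam unfolding \<delta>_def by (simp add: pos_less_divide_eq mult.commute)
    have sl: "s \<le> l" using s unfolding \<delta>_def by simp
    have sr: "s * (lam + 1) < r" using s lam unfolding \<delta>_def by (simp add: pos_less_divide_eq)
    have "dist (s, t) (0, 0) = sqrt (s^2 + t^2)" by (simp add: dist_Pair_Pair)
    also have "\<dots> \<le> sqrt (s^2) + sqrt (t^2)" by (rule sqrt_add_le_add_sqrt) auto
    also have "\<dots> = s + t" using s t0 by simp
    also have "\<dots> < r" using sr unfolding t_def by (simp add: algebra_simps)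
    finally have "dist (s, t) (0, 0) < r" .
    then have "dist ((s^2 + t^2 - (dist (\<gamma> s) (\<eta> t))^2) / (2 * s * t)) L < e'/2"
      using rr[of "(s, t)"] s t0 by auto
    then have EL: "L - e'/2 < (s^2 + t^2 - (dist (\<gamma> s) (\<eta> t))^2) / (2 * s * t)"
      unfolding dist_real_def abs_less_iff by linarith
    define a where "a = dist (\<gamma> s) (\<eta> t)"
    have "(L - e'/2) * (2 * s * t) < s^2 + t^2 - a^2"
      using EL s t0 unfolding a_def by (simp add: pos_less_divide_eq)
    then have a2: "a^2 < s^2 * (1 + lam^2 - 2 * lam * L + lam * e')"
      unfolding t_def by (simp add: power2_eq_square algebra_simps)
    have pos: "0 < lam - L + e'" using lam L e' by linarith
    have "1 + lam^2 - 2 * lam * L + lam * e' \<le> (lam - L + e')^2"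
    proof -
      have eq: "(lam - L + e')^2 - (1 + lam^2 - 2 * lam * L + lam * e') = lam * e' - 2 * (L * e') + L^2 + e'^2 - 1"
        by (simp add: power2_eq_square algebra_simps)
      have "L * e' \<le> 1 * e'" using L e' by (intro mult_right_mono) auto
      moreover have "0 \<le> L^2" "0 \<le> e'^2" by simp_all
      ultimately have "0 \<le> (lam - L + e')^2 - (1 + lam^2 - 2 * lam * L + lam * e')" unfolding eq using lam(2) by linarith
      then show ?thesis by linarith
    qed
    then have "s^2 * (1 + lam^2 - 2 * lam * L + lam * e') \<le> s^2 * (lam - L + e')^2" by (intro mult_left_mono) auto
    then have "a^2 \<le> (s * (lam - L + e'))^2" using a2 by (simp add: power_mult_distrib)
    then have aa: "a \<le> s * (lam - L + e')" using pos s power2_le_imp_le[of a "s * (lam - L + e')"] by simp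
    have "dist (\<eta> t) x = d - t" using geod_dist[OF h(1), of t d] h t0 td by simp
    then have "dist (\<gamma> s) x \<le> a + (d - t)" unfolding a_def using dist_triangle[of "\<gamma> s" x "\<eta> t"] by simp
    then have "dist (\<gamma> s) x - d \<le> s * (lam - L + e') - lam * s" using aa unfolding t_def by linarith
    also have "\<dots> = (- L + e') * s" by (simp add: algebra_simps)
    also have "\<dots> \<le> (- L + \<epsilon>) * s" using e' s by (intro mult_right_mono) auto
    finally show "dist (\<gamma> s) x - d \<le> (- cos (angle \<gamma> \<eta>) + \<epsilon>) * s" unfolding L_def .
  qed
qed


definition sq :: "real \<Rightarrow> nat \<Rightarrow> real" where "sq l n = min l 1 / real (Suc n)"

lemma sq_props: "0 < l \<Longrightarrow> 0 < sq l n \<and> sq l n \<le> l \<and> sq l n \<le> 1"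
  unfolding sq_def by (auto simp: divide_simps) (simp_all add: min_le_iff_disj order_trans[of _ "1::real"] )

lemma sq_ev: assumes "0 < l" "0 < \<delta>" shows "eventually (\<lambda>n. sq l n < \<delta>) sequentially"
proof -
  have "(\<lambda>n. min l 1 / real n) \<longlonglongrightarrow> 0" by (rule lim_const_over_n)
  then have "(\<lambda>n. min l 1 / real (Suc n)) \<longlonglongrightarrow> 0" by (rule LIMSEQ_Suc)
  from order_tendstoD(2)[OF this assms(2)] show ?thesis unfolding sq_def .
qed

definition fv :: "(real \<Rightarrow> 'a::metric_space) \<Rightarrow> real \<Rightarrow> 'a \<Rightarrow> 'a \<Rightarrow> nat \<Rightarrow> real" where
  "fv \<gamma> l m x n = ((dist (\<gamma> (sq l n)) x)^2 - (dist m x)^2) / (2 * sq l n)"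

lemma fv_diff:
  assumes g: "geodesic_path l \<gamma>" "\<gamma> 0 = m" "0 < l"
  shows "\<bar>dist (\<gamma> (sq l n)) x - dist m x\<bar> \<le> sq l n"
proof -
  have "dist m (\<gamma> (sq l n)) = sq l n" using geod_dist[OF g(1), of 0 "sq l n"] g sq_props[OF g(3), of n] by simp
  then show ?thesis using dist_triangle[of "\<gamma> (sq l n)" x m] dist_triangle[of m x "\<gamma> (sq l n)"]
    by (simp add: dist_commute abs_le_iff)
qed

lemma fv_bounds:
  assumes g: "geodesic_path l \<gamma>" "\<gamma> 0 = m" "0 < l"
  shows "- dist m x - 1/2 \<le> fv \<gamma> l m x n \<and> fv \<gamma> l m x n \<le> dist m x + 1/2"
proof -
  define s where "s = sq l n"
  define D where "D = dist (\<gamma> s) x"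
  define d where "d = dist m x"
  have s: "0 < s" "s \<le> 1" using sq_props[OF g(3)] unfolding s_def by auto
  have Dd: "\<bar>D - d\<bar> \<le> s" using fv_diff[OF g] unfolding D_def d_def s_def .
  have d0: "0 \<le> d" "0 \<le> D" unfolding d_def D_def by auto
  have eq: "D^2 - d^2 = (D - d) * (D + d)" by (simp add: power2_eq_square algebra_simps)
  have "\<bar>(D - d) * (D + d)\<bar> \<le> s * (2 * d + s)"
    unfolding abs_mult using Dd d0 by (intro mult_mono) (auto simp: abs_le_iff)
  then have "\<bar>D^2 - d^2\<bar> / (2 * s) \<le> s * (2 * d + s) / (2 * s)" unfolding eq using s
    by (intro divide_right_mono) auto
  also have "\<dots> = d + s/2" using s by (simp add: field_simps)
  finally have "\<bar>D^2 - d^2\<bar> / (2 * s) \<le> d + 1/2" using s by simp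
  moreover have "\<bar>(D^2 - d^2) / (2 * s)\<bar> = \<bar>D^2 - d^2\<bar> / (2 * s)"
  proof -
    have a2: "\<bar>2 * s\<bar> = 2 * s" using s by linarith
    show ?thesis by (simp only: abs_divide a2)
  qed
  ultimately have "\<bar>(D^2 - d^2) / (2 * s)\<bar> \<le> d + 1/2" by linarith
  then show ?thesis unfolding fv_def s_def[symmetric] D_def[symmetric] d_def[symmetric] abs_le_iff by linarith
qed

lemma pw:
  fixes \<gamma> \<eta> :: "real \<Rightarrow> 'a::metric_space"
  assumes cat: "CAT \<kappa> TYPE('a)"
    and g: "geodesic_path l \<gamma>" "0 < l" "\<gamma> 0 = m"
    and h: "0 < dist m x \<Longrightarrow> geodesic_seg m x \<eta>"
  shows "ennreal (dist m x + 1 + dist m x * cos (angle \<gamma> \<eta>)) \<le> liminf (\<lambda>n. ennreal (dist m x + 1 - fv \<gamma> l m x n))"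
proof -
  define d where "d = dist m x"
  define L where "L = cos (angle \<gamma> \<eta>)"
  define c where "c = d + 1 + d * L"
  have d0: "0 \<le> d" unfolding d_def by simp
  have L1: "-1 \<le> L" "L \<le> 1" unfolding L_def by auto
  have "- d \<le> d * L" using L1 d0 by (metis mult.commute mult_left_mono mult_minus1_right)
  then have c1: "1 \<le> c" unfolding c_def by linarith
  have key: "\<forall>\<^sub>F n in sequentially. fv \<gamma> l m x n \<le> d * (- L + \<epsilon>) + sq l n / 2" if e: "0 < \<epsilon>" for \<epsilon>
  proof (cases "d = 0")
    case True
    then have xm: "x = m" unfolding d_def by simp
    have "fv \<gamma> l m x n \<le> d * (- L + \<epsilon>) + sq l n / 2" for n
    proof -
      have "dist (\<gamma> (sq l n)) m = sq l n" using geod_dist[OF g(1), of "sq l n" 0] g sq_props[OF g(2), of n] by simp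
      then show ?thesis using True sq_props[OF g(2), of n] unfolding fv_def xm d_def
        by (simp add: power2_eq_square)
    qed
    then show ?thesis by simp
  next
    case False
    then have dp: "0 < d" using d0 by simp
    have gs: "geodesic_seg m x \<eta>" using h dp unfolding d_def by simp
    then have hh: "geodesic_path d \<eta>" "\<eta> 0 = m" "\<eta> d = x" unfolding geodesic_seg_def d_def by auto
    obtain \<delta> where \<delta>: "0 < \<delta>" "\<And>s. 0 < s \<and> s < \<delta> \<Longrightarrow> dist (\<gamma> s) x - d \<le> (- L + \<epsilon>) * s"
      using first_var[OF cat g hh(1) dp hh(2,3) e] unfolding L_def by blast
    show ?thesis using sq_ev[OF g(2) \<delta>(1)]
    proof eventually_elim
      case (elim n)
      define s where "s = sq l n"
      define D where "D = dist (\<gamma> s) x"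
      have s: "0 < s" "s < \<delta>" using elim sq_props[OF g(2)] unfolding s_def by auto
      have Dd: "\<bar>D - d\<bar> \<le> s" using fv_diff[OF g(1,3,2)] unfolding D_def d_def s_def .
      have up: "D - d \<le> (- L + \<epsilon>) * s" using \<delta>(2)[of s] s unfolding D_def by auto
      have "(D - d)^2 \<le> s^2" using Dd by (simp add: abs_le_iff power2_le_iff_abs_le)
      moreover have "2 * d * (D - d) \<le> 2 * d * ((- L + \<epsilon>) * s)" using up d0 by (intro mult_left_mono) auto
      ultimately have "D^2 - d^2 \<le> 2 * d * ((- L + \<epsilon>) * s) + s^2"
        by (simp add: power2_eq_square algebra_simps)
      then have "(D^2 - d^2) / (2 * s) \<le> (2 * d * ((- L + \<epsilon>) * s) + s^2) / (2 * s)"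
        using s by (intro divide_right_mono) auto
      also have "\<dots> = d * (- L + \<epsilon>) + s / 2" using s by (simp add: field_simps power2_eq_square)
      finally show ?case unfolding fv_def D_def s_def d_def .
    qed
  qed
  show ?thesis unfolding le_Liminf_iff d_def[symmetric] L_def[symmetric] c_def[symmetric]
  proof (intro allI impI)
    fix y assume y: "y < ennreal c"
    then have yt: "y < top" using order.strict_trans ennreal_less_top by blast
    define y' where "y' = enn2real y"
    have yy: "y = ennreal y'" "0 \<le> y'" unfolding y'_def using yt by auto
    have y'c: "y' < c" using y yy c1 by (simp add: ennreal_less_iff)
    define \<epsilon> where "\<epsilon> = (c - y') / (2 * (d + 1))"
    have e: "0 < \<epsilon>" unfolding \<epsilon>_def using y'c d0 by simp
    have d1: "d + 1 > 0" using d0 by simp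
    have de: "(d + 1) * \<epsilon> = (c - y') / 2" unfolding \<epsilon>_def using d1 by (simp add: field_simps)
    show "\<forall>\<^sub>F n in sequentially. y < ennreal (d + 1 - fv \<gamma> l m x n)"
      using key[OF e] sq_ev[OF g(2) e]
    proof eventually_elim
      case (elim n)
      have f1: "fv \<gamma> l m x n \<le> d * \<epsilon> + sq l n / 2 - d * L" using elim(1) by (simp add: algebra_simps)
      have f2: "y' = d + 1 + d * L - 2 * (d * \<epsilon>) - 2 * \<epsilon>" using de unfolding c_def by (simp add: algebra_simps)
      have "y' < d + 1 - fv \<gamma> l m x n" using f1 f2 elim(2) e d0 mult_nonneg_nonneg[of d \<epsilon>] by linarith
      then show ?case using yy by (simp add: ennreal_less_iff)
    qed
  qed
qed


context
  fixes \<mu> :: "'a::metric_space measure" and m :: 'a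
  assumes P: "prob_space \<mu>" and S: "sets \<mu> = sets borel" and fin: "finite_frechet \<mu>" and mean: "frechet_mean \<mu> m"
begin

lemma bm: assumes "h \<in> borel_measurable borel" shows "h \<in> borel_measurable \<mu>"
proof -
  have "measurable \<mu> (borel::'b::topological_space measure) = measurable borel borel" by (rule measurable_cong_sets[OF S refl])
  then show ?thesis using assms by simp
qed

lemma dist_bm[measurable]: "(\<lambda>x. dist c x) \<in> borel_measurable \<mu>"
  by (rule bm, rule borel_measurable_continuous_onI) (intro continuous_intros)

lemma int_d2: "integrable \<mu> (\<lambda>x. (dist c x)^2)" using fin unfolding finite_frechet_def by blast

lemma int_c: "integrable \<mu> (\<lambda>x. c::real)"
  using finite_measure.integrable_const[OF prob_space.finite_measure[OF P]] .

lemma int_d: "integrable \<mu> (\<lambda>x. dist c x)"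
proof (rule Bochner_Integration.integrable_bound[OF Bochner_Integration.integrable_add[OF int_d2 int_c[of 1]]])
  show "(\<lambda>x. dist c x) \<in> borel_measurable \<mu>" by (rule dist_bm)
  show "AE x in \<mu>. norm (dist c x) \<le> norm ((dist c x)^2 + 1)"
  proof (rule AE_I2)
    fix x
    have "dist c x \<le> (dist c x)^2 + 1"
    proof (cases "dist c x \<le> 1")
      case True then show ?thesis by (simp add: add_increasing)
    next
      case False then have "dist c x * 1 \<le> dist c x * dist c x" by (intro mult_left_mono) auto
      then show ?thesis by (simp add: power2_eq_square)
    qed
    then show "norm (dist c x) \<le> norm ((dist c x)^2 + 1)" by simp
  qed
qed

lemma frechet_nonneg: "0 \<le> frechet \<mu> p"
  unfolding frechet_def by (simp add: integral_nonneg_AE)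

lemma tdist_log:
  assumes "0 \<le> t"
  shows "(tdist (\<gamma>, t) (logm m x))^2 = t^2 + (dist m x)^2 - 2 * t * dist m x * cos (angle \<gamma> (fst (logm m x)))"
proof -
  define d where "d = dist m x"
  define c where "c = cos (angle \<gamma> (fst (logm m x)))"
  have "t * d * c \<le> t * d * 1" using assms unfolding d_def c_def by (intro mult_left_mono) auto
  moreover have "0 \<le> (t - d)^2" by simp
  ultimately have R: "0 \<le> t^2 + d^2 - 2 * (t * d * c)" by (simp add: power2_diff algebra_simps)
  have "(tdist (\<gamma>, t) (logm m x))^2 = (sqrt (t^2 + d^2 - 2 * (t * d * c)))^2"
    unfolding tdist_def tinner_def tnorm_def logm_def d_def c_def by simp
  also have "\<dots> = t^2 + d^2 - 2 * (t * d * c)" using R by simp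
  finally show ?thesis unfolding d_def c_def by (simp add: algebra_simps)
qed

lemma tf_apex: "tangent_frechet \<mu> m (apex m) = ennreal (frechet \<mu> m)"
proof -
  have "\<And>x. tdist (apex m) (logm m x) = dist m x"
    unfolding tdist_def tinner_def tnorm_def apex_def logm_def by simp
  then have "tangent_frechet \<mu> m (apex m) = (\<integral>\<^sup>+ x. ennreal ((dist m x)^2 / 2) \<partial>\<mu>)"
    unfolding tangent_frechet_def by simp
  also have "\<dots> = ennreal (\<integral>x. (dist m x)^2 / 2 \<partial>\<mu>)"
    by (rule nn_integral_eq_integral) (use int_d2 in auto)
  also have "(\<integral>x. (dist m x)^2 / 2 \<partial>\<mu>) = frechet \<mu> m" unfolding frechet_def by simp
  finally show ?thesis .
qed

lemma tf_zero: "tangent_frechet \<mu> m (\<gamma>, 0) = tangent_frechet \<mu> m (apex m)"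
proof -
  have "\<And>x. tdist (\<gamma>, 0) (logm m x) = tdist (apex m) (logm m x)"
    unfolding tdist_def tinner_def tnorm_def apex_def logm_def by simp
  then show ?thesis unfolding tangent_frechet_def by simp
qed

lemma tf_finite:
  assumes "0 \<le> t"
  shows "tangent_frechet \<mu> m (\<gamma>, t) < \<infinity>"
proof -
  have "tangent_frechet \<mu> m (\<gamma>, t) \<le> (\<integral>\<^sup>+ x. ennreal (t^2 + (dist m x)^2) \<partial>\<mu>)"
    unfolding tangent_frechet_def
  proof (rule nn_integral_mono, rule ennreal_leI)
    fix x
    define d where "d = dist m x"
    define c where "c = cos (angle \<gamma> (fst (logm m x)))"
    have td: "0 \<le> t * d" using assms unfolding d_def by simp
    have "-1 \<le> c" unfolding c_def by simp
    then have "- (t * d * 1) \<le> t * d * c" using mult_left_mono[of "-1" c "t * d"] td by simp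
    moreover note td
    moreover have "2 * (t * d) \<le> t^2 + d^2" using zero_le_power2[of "t - d"] unfolding power2_diff by linarith
    ultimately have "(t^2 + d^2 - 2 * t * d * c) / 2 \<le> t^2 + d^2" by (simp add: algebra_simps)
    then show "(tdist (\<gamma>, t) (logm m x))^2 / 2 \<le> t^2 + (dist m x)^2"
      unfolding tdist_log[OF assms] d_def c_def .
  qed
  also have "\<dots> = ennreal (\<integral>x. t^2 + (dist m x)^2 \<partial>\<mu>)"
    by (rule nn_integral_eq_integral) (use int_d2 int_c in auto)
  also have "\<dots> < \<infinity>" by simp
  finally show ?thesis .
qed


lemma fv_int: "integrable \<mu> (\<lambda>x. fv \<gamma> l m x n)"
  unfolding fv_def by (intro Bochner_Integration.integrable_divide Bochner_Integration.integrable_diff int_d2)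

lemma fv_bm[measurable]: "(\<lambda>x. fv \<gamma> l m x n) \<in> borel_measurable \<mu>"
  unfolding fv_def by measurable

lemma fv_int_nonneg:
  assumes g: "geodesic_path l \<gamma>" "0 < l" "\<gamma> 0 = m"
  shows "0 \<le> (\<integral>x. fv \<gamma> l m x n \<partial>\<mu>)"
proof -
  define s where "s = sq l n"
  have s: "0 < s" using sq_props[OF g(2)] unfolding s_def by auto
  have "frechet \<mu> m \<le> frechet \<mu> (\<gamma> s)" using mean unfolding frechet_mean_def by blast
  then have le: "(\<integral>x. (dist m x)^2 \<partial>\<mu>) \<le> (\<integral>x. (dist (\<gamma> s) x)^2 \<partial>\<mu>)" unfolding frechet_def by simp
  have "(\<integral>x. fv \<gamma> l m x n \<partial>\<mu>) = ((\<integral>x. (dist (\<gamma> s) x)^2 \<partial>\<mu>) - (\<integral>x. (dist m x)^2 \<partial>\<mu>)) / (2 * s)"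
    unfolding fv_def s_def[symmetric] using int_d2 by simp
  also have "\<dots> \<ge> 0" using le s by simp
  finally show ?thesis .
qed

lemma tf_lower:
  assumes cat: "CAT \<kappa> TYPE('a)" and AEu: "AE x in \<mu>. unique_shortest m x"
    and g: "geodesic_path l \<gamma>" "0 < l" "\<gamma> 0 = m" and t: "0 < t"
  shows "ennreal (frechet \<mu> m + t^2 / 2) \<le> tangent_frechet \<mu> m (\<gamma>, t)"
proof -
  define A where "A = (\<integral>x. dist m x + 1 \<partial>\<mu>)"
  define gg where "gg = (\<lambda>n x. ennreal (dist m x + 1 - fv \<gamma> l m x n))"
  define G where "G = (\<lambda>x. liminf (\<lambda>n. gg n x))"
  have ggm: "\<And>n. gg n \<in> borel_measurable \<mu>" unfolding gg_def by measurable
  have Gm[measurable]: "G \<in> borel_measurable \<mu>" unfolding G_def by (rule borel_measurable_liminf[OF ggm])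
  have gg_int: "integral\<^sup>N \<mu> (gg n) \<le> ennreal A" for n
  proof -
    have nn: "AE x in \<mu>. 0 \<le> dist m x + 1 - fv \<gamma> l m x n"
    proof (rule AE_I2)
      fix x show "0 \<le> dist m x + 1 - fv \<gamma> l m x n" using fv_bounds[OF g(1,3,2), of x n] by linarith
    qed
    have "integral\<^sup>N \<mu> (gg n) = ennreal (\<integral>x. dist m x + 1 - fv \<gamma> l m x n \<partial>\<mu>)"
      unfolding gg_def by (rule nn_integral_eq_integral) (use int_d int_c fv_int nn in auto)
    also have "(\<integral>x. dist m x + 1 - fv \<gamma> l m x n \<partial>\<mu>) = A - (\<integral>x. fv \<gamma> l m x n \<partial>\<mu>)"
      unfolding A_def using int_d int_c fv_int by simp
    also have "ennreal (A - (\<integral>x. fv \<gamma> l m x n \<partial>\<mu>)) \<le> ennreal A"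
      using fv_int_nonneg[OF g] by (intro ennreal_leI) simp
    finally show ?thesis .
  qed
  have GA: "integral\<^sup>N \<mu> G \<le> ennreal A"
  proof -
    have "integral\<^sup>N \<mu> G \<le> liminf (\<lambda>n. integral\<^sup>N \<mu> (gg n))"
      unfolding G_def by (rule nn_integral_liminf[OF ggm])
    also have "\<dots> \<le> ennreal A" by (rule Liminf_le) (use gg_int in auto)
    finally show ?thesis .
  qed
  have Gb: "G x \<le> ennreal (2 * dist m x + 2)" for x
  proof -
    have "gg n x \<le> ennreal (2 * dist m x + 2)" for n
      unfolding gg_def using fv_bounds[OF g(1,3,2), of x n] by (intro ennreal_leI) simp
    then show ?thesis unfolding G_def by (intro Liminf_le) auto
  qed
  have Gfin: "G x < top" for x using Gb[of x] by (simp add: order_le_less_trans)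
  define J where "J = (\<lambda>x. (t^2 + (dist m x)^2) / 2 + t * (dist m x + 1) - t * enn2real (G x))"
  have eG_int: "integrable \<mu> (\<lambda>x. enn2real (G x))"
  proof (rule Bochner_Integration.integrable_bound[OF Bochner_Integration.integrable_add[OF integrable_mult_right[OF int_d[of m], of 2] int_c[of 2]]])
    show "(\<lambda>x. enn2real (G x)) \<in> borel_measurable \<mu>" by measurable
    show "AE x in \<mu>. norm (enn2real (G x)) \<le> norm (2 * dist m x + 2)"
      using Gb by (intro AE_I2) (simp add: enn2real_leI)
  qed
  have J_int: "integrable \<mu> J" unfolding J_def
    using int_d2 int_d int_c eG_int by simp
  have eG: "(\<integral>x. enn2real (G x) \<partial>\<mu>) \<le> A"
  proof -
    have "(\<integral>x. enn2real (G x) \<partial>\<mu>) = enn2real (\<integral>\<^sup>+ x. ennreal (enn2real (G x)) \<partial>\<mu>)"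
      by (rule integral_eq_nn_integral) auto
    also have "(\<integral>\<^sup>+ x. ennreal (enn2real (G x)) \<partial>\<mu>) = integral\<^sup>N \<mu> G" using Gfin by simp
    also have "enn2real (integral\<^sup>N \<mu> G) \<le> A"
      using GA by (intro enn2real_leI) (auto simp: A_def intro!: integral_nonneg_AE)
    finally show ?thesis .
  qed
  have intJ: "frechet \<mu> m + t^2 / 2 \<le> (\<integral>x. J x \<partial>\<mu>)"
  proof -
    have "(\<integral>x. J x \<partial>\<mu>) = (t^2 + (\<integral>x. (dist m x)^2 \<partial>\<mu>)) / 2 + t * A - t * (\<integral>x. enn2real (G x) \<partial>\<mu>)"
      unfolding J_def A_def using int_d2 int_d int_c eG_int prob_space.prob_space[OF P]
      by (simp add: Bochner_Integration.integral_add Bochner_Integration.integral_diff)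
    moreover have "t * (\<integral>x. enn2real (G x) \<partial>\<mu>) \<le> t * A" using eG t by (intro mult_left_mono) auto
    ultimately show ?thesis unfolding frechet_def by (simp add: add_divide_distrib)
  qed
  have pwJ: "AE x in \<mu>. ennreal (J x) \<le> ennreal ((tdist (\<gamma>, t) (logm m x))^2 / 2)"
    using AEu
  proof eventually_elim
    case (elim x)
    define \<eta> where "\<eta> = fst (logm m x)"
    define d where "d = dist m x"
    define c where "c = cos (angle \<gamma> \<eta>)"
    have seg: "geodesic_seg m x \<eta>"
    proof -
      have "\<exists>\<gamma>. geodesic_seg m x \<gamma>" using elim unfolding unique_shortest_def by blast
      then show ?thesis unfolding \<eta>_def logm_def by (simp add: someI_ex)
    qed
    have "ennreal (d + 1 + d * c) \<le> G x"
      using pw[OF cat g, of x \<eta>] seg unfolding G_def gg_def d_def c_def by blast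
    then have "enn2real (ennreal (d + 1 + d * c)) \<le> enn2real (G x)" using Gfin by (intro enn2real_mono) auto
    moreover have "0 \<le> d + 1 + d * c"
    proof -
      have "-1 \<le> c" unfolding c_def by simp
      then have "- (d * 1) \<le> d * c" using mult_left_mono[of "-1" c d] unfolding d_def by simp
      then show ?thesis unfolding d_def by simp
    qed
    ultimately have Gc: "d + 1 + d * c \<le> enn2real (G x)" by simp
    have "t * (d + 1 + d * c) \<le> t * enn2real (G x)" using Gc t by (intro mult_left_mono) auto
    moreover have "t * (d + 1 + d * c) = t * d + t + t * d * c" by (simp add: algebra_simps)
    moreover have "J x = (t^2 + d^2) / 2 + t * d + t - t * enn2real (G x)" unfolding J_def d_def by (simp add: algebra_simps)
    moreover have "(t^2 + d^2 - 2 * t * d * c) / 2 = (t^2 + d^2) / 2 - t * d * c" by (simp add: field_simps)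
    ultimately have "J x \<le> (t^2 + d^2 - 2 * t * d * c) / 2" by linarith
    then show ?case unfolding tdist_log[of t \<gamma> x, OF less_imp_le[OF t]] \<eta>_def[symmetric] d_def[symmetric] c_def[symmetric]
      by (intro ennreal_leI)
  qed
  have "ennreal (frechet \<mu> m + t^2 / 2) \<le> ennreal (\<integral>x. J x \<partial>\<mu>)" using intJ by (rule ennreal_leI)
  also have "\<dots> \<le> ennreal (\<integral>x. max (J x) 0 \<partial>\<mu>)"
    using J_int by (intro ennreal_leI integral_mono) auto
  also have "\<dots> = (\<integral>\<^sup>+ x. ennreal (max (J x) 0) \<partial>\<mu>)"
    by (rule nn_integral_eq_integral[symmetric]) (use J_int in auto)
  also have "\<dots> = (\<integral>\<^sup>+ x. ennreal (J x) \<partial>\<mu>)"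
    by (rule nn_integral_cong) (simp add: max_def ennreal_neg)
  also have "\<dots> \<le> tangent_frechet \<mu> m (\<gamma>, t)"
    unfolding tangent_frechet_def by (rule nn_integral_mono_AE[OF pwJ])
  finally show ?thesis .
qed

end


theorem lemmal:
  fixes \<mu> :: "'a::metric_space measure" and \<kappa> :: real and m :: 'a
  assumes "CAT \<kappa> TYPE('a)"
    and "prob_space \<mu>" and "sets \<mu> = sets borel"
    and "localized \<mu> m"
  shows "tangent_frechet_mean \<mu> m (apex m)"
proof -
  note cat = assms(1) and P = assms(2) and S = assms(3)
  have fin: "finite_frechet \<mu>" and mean: "frechet_mean \<mu> m" and AEu: "AE x in \<mu>. unique_shortest m x"
    using assms(4) unfolding localized_def by auto
  note apx = tf_apex[OF P S fin mean]
  have F0: "0 \<le> frechet \<mu> m" by (rule frechet_nonneg[OF P S fin mean])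
  have low: "tangent_frechet \<mu> m (apex m) \<le> tangent_frechet \<mu> m W \<and>
      (tangent_frechet \<mu> m W \<le> tangent_frechet \<mu> m (apex m) \<longrightarrow> tdist W (apex m) = 0)"
    if W: "W \<in> tangent_cone m" for W
  proof -
    obtain \<gamma> t where Wd: "W = (\<gamma>, t)" by (cases W)
    have dW: "tdist W (apex m) = t" if "0 \<le> t"
      unfolding Wd tdist_def tinner_def tnorm_def apex_def using that by simp
    from W consider "t = 0" | "0 < t" "\<gamma> \<in> geodesics_from m" unfolding Wd tangent_cone_def by auto
    then show ?thesis
    proof cases
      case 1
      then show ?thesis using tf_zero[OF P S fin mean, of \<gamma>] dW unfolding Wd by simp
    next
      case 2
      obtain l where l: "0 < l" "geodesic_path l \<gamma>" "\<gamma> 0 = m" using 2(2) unfolding geodesics_from_def by blast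
      have lo: "ennreal (frechet \<mu> m + t^2 / 2) \<le> tangent_frechet \<mu> m W"
        unfolding Wd by (rule tf_lower[OF P S fin mean cat AEu l(2) l(1) l(3) 2(1)])
      have "ennreal (frechet \<mu> m) \<le> ennreal (frechet \<mu> m + t^2 / 2)" by (intro ennreal_leI) simp
      with lo have A: "tangent_frechet \<mu> m (apex m) \<le> tangent_frechet \<mu> m W" unfolding apx by simp
      have B: "\<not> tangent_frechet \<mu> m W \<le> tangent_frechet \<mu> m (apex m)"
      proof
        assume "tangent_frechet \<mu> m W \<le> tangent_frechet \<mu> m (apex m)"
        with lo have "ennreal (frechet \<mu> m + t^2 / 2) \<le> ennreal (frechet \<mu> m)" unfolding apx by simp
        then have "frechet \<mu> m + t^2 / 2 \<le> frechet \<mu> m" using F0 by simp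
        then show False using 2(1) by simp
      qed
      show ?thesis using A B by simp
    qed
  qed
  show ?thesis
    unfolding tangent_frechet_mean_def
  proof (intro conjI ballI)
    show "apex m \<in> tangent_cone m" unfolding apex_def tangent_cone_def by simp
  next
    fix W assume "W \<in> tangent_cone m"
    then obtain \<gamma> t where "W = (\<gamma>, t)" "0 \<le> t" unfolding tangent_cone_def by auto
    then show "tangent_frechet \<mu> m W < \<infinity>" using tf_finite[OF P S fin mean] by simp
  next
    fix W assume "W \<in> tangent_cone m"
    then show "tangent_frechet \<mu> m (apex m) \<le> tangent_frechet \<mu> m W" using low by blast
  next
    fix W assume "W \<in> tangent_cone m"
    then show "tangent_frechet \<mu> m W \<le> tangent_frechet \<mu> m (apex m) \<longrightarrow> tdist W (apex m) = 0" using low by blast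
  qed
qed


end
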